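(* The set $X^{\mathcal B}=\{x^{\mathbf b}:\mathbf b\in\mathcal B\}$ is a basis of the $\mathbb C(\lambda)$-vector space $\mathcal W'$.
   Context: Let $A=\{\mathbf a_1,\dots,\mathbf a_m\}\subseteq\mathbb Z^n$ be linearly independent over $\mathbb R$, $\mathbf a_0\in\mathbb Z^n$, and $\ell_0,\dots,\ell_m$ positive integers with gcd $1$, $\ell_0\mathbf a_0=\sum_{j=1}^m\ell_j\mathbf a_j$, $\ell_0=\sum_{j=1}^m\ell_j$. Let $f_\lambda=\sum_{j=1}^m\ell_jx^{\mathbf a_j}-\ell_0\lambda x^{\mathbf a_0}$. Let $V$ be the real span of $A$, $V_{\mathbb Z}=V\cap\mathbb Z^n$, $C(A)$ the real cone generated by $A$, $M=V_{\mathbb Z}\cap C(A)$. Let $S'$ be the $\mathbb C(\lambda)$-span of $\{x^u:u\in M\}$ in $\mathbb C(\lambda)[x_1^{\pm1},\dots,x_n^{\pm1}]$, $D_i=x_i\partial/\partial x_i+x_i\partial f_\lambda/\partial x_i$ ($i=1,\dots,n$) acting on $S'$, and $\mathcal W'=S'/\sum_{i=1}^nD_iS'$. Let $P(A)=\{\sum_jc_j\mathbf a_j:0\le c_j<1\}$ and $\mathcal B=V_{\mathbb Z}\cap P(A)$. *)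

theory Defs
  imports "HOL-Computational_Algebra.Polynomial" "HOL-Computational_Algebra.Fraction_Field"
begin

type_synonym ratfun = "complex poly fract"

definition lam :: ratfun where
  "lam = Fract [:0, 1:] 1"

text \<open>Laurent polynomials in variables x_i (i :: 'n) with coefficients in C(lambda):
  coefficient functions on exponent vectors ('n \<Rightarrow> int) with finite support.\<close>
type_synonym 'n laurent = "('n \<Rightarrow> int) \<Rightarrow> ratfun"

definition lsupp :: "'n laurent \<Rightarrow> ('n \<Rightarrow> int) set" where
  "lsupp p = {u. p u \<noteq> 0}"

definition is_laurent :: "'n laurent \<Rightarrow> bool" where
  "is_laurent p \<longleftrightarrow> finite (lsupp p)"

definition xmon :: "('n \<Rightarrow> int) \<Rightarrow> 'n laurent" where
  "xmon u = (\<lambda>v. if v = u then 1 else 0)"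

definition lmult :: "'n laurent \<Rightarrow> 'n laurent \<Rightarrow> 'n laurent" where
  "lmult p q = (\<lambda>v. \<Sum>u\<in>lsupp p. p u * q (\<lambda>i. v i - u i))"

text \<open>The Euler operator x_i d/dx_i.\<close>
definition theta :: "'n \<Rightarrow> 'n laurent \<Rightarrow> 'n laurent" where
  "theta i p = (\<lambda>v. of_int (v i) * p v)"

definition flam :: "nat \<Rightarrow> (nat \<Rightarrow> 'n \<Rightarrow> int) \<Rightarrow> (nat \<Rightarrow> nat) \<Rightarrow> 'n laurent" where
  "flam m a l = (\<lambda>v. (\<Sum>j\<in>{1..m}. of_nat (l j) * xmon (a j) v)
                     - of_nat (l 0) * lam * xmon (a 0) v)"

text \<open>D_i = x_i d/dx_i + x_i (d f_lambda / d x_i).\<close>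
definition Dop :: "nat \<Rightarrow> (nat \<Rightarrow> 'n \<Rightarrow> int) \<Rightarrow> (nat \<Rightarrow> nat) \<Rightarrow> 'n \<Rightarrow> 'n laurent \<Rightarrow> 'n laurent" where
  "Dop m a l i g = (\<lambda>v. theta i g v + lmult (theta i (flam m a l)) g v)"

definition Mset :: "nat \<Rightarrow> (nat \<Rightarrow> 'n \<Rightarrow> int) \<Rightarrow> ('n \<Rightarrow> int) set" where
  "Mset m a = {u. \<exists>c::nat \<Rightarrow> real. (\<forall>j\<in>{1..m}. 0 \<le> c j) \<and>
                   (\<forall>i. real_of_int (u i) = (\<Sum>j\<in>{1..m}. c j * real_of_int (a j i)))}"

definition Bset :: "nat \<Rightarrow> (nat \<Rightarrow> 'n \<Rightarrow> int) \<Rightarrow> ('n \<Rightarrow> int) set" where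
  "Bset m a = {u. \<exists>c::nat \<Rightarrow> real. (\<forall>j\<in>{1..m}. 0 \<le> c j \<and> c j < 1) \<and>
                   (\<forall>i. real_of_int (u i) = (\<Sum>j\<in>{1..m}. c j * real_of_int (a j i)))}"

definition Sprime :: "nat \<Rightarrow> (nat \<Rightarrow> 'n \<Rightarrow> int) \<Rightarrow> 'n laurent set" where
  "Sprime m a = {g. is_laurent g \<and> lsupp g \<subseteq> Mset m a}"

definition Dimage :: "nat \<Rightarrow> (nat \<Rightarrow> 'n \<Rightarrow> int) \<Rightarrow> (nat \<Rightarrow> nat) \<Rightarrow> 'n laurent set" where
  "Dimage m a l = {h. \<exists>g::'n \<Rightarrow> 'n laurent. (\<forall>i. g i \<in> Sprime m a) \<and>
                       h = (\<lambda>v. \<Sum>i\<in>UNIV. Dop m a l i (g i) v)}"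

definition lincomb :: "('n \<Rightarrow> int) set \<Rightarrow> (('n \<Rightarrow> int) \<Rightarrow> ratfun) \<Rightarrow> 'n laurent" where
  "lincomb B c = (\<lambda>v. \<Sum>b\<in>B. c b * xmon b v)"

text \<open>X^B is a basis of W' = S' / Dimage: the family of classes of x^b (b \<in> B) is
  linearly independent and spanning in the quotient, i.e. (unfolded) ...\<close>
definition is_quotient_basis :: "'n laurent set \<Rightarrow> 'n laurent set \<Rightarrow> ('n \<Rightarrow> int) set \<Rightarrow> bool" where
  "is_quotient_basis S R B \<longleftrightarrow>
     finite B \<and> (\<forall>b\<in>B. xmon b \<in> S) \<and>
     (\<forall>c. lincomb B c \<in> R \<longrightarrow> (\<forall>b\<in>B. c b = 0)) \<and>
     (\<forall>g\<in>S. \<exists>c. (\<lambda>v. g v - lincomb B c v) \<in> R)"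

end

theory Submission
  imports Defs "HOL-Analysis.Analysis" "HOL-Computational_Algebra.Formal_Laurent_Series" "HOL-Computational_Algebra.Polynomial_FPS"
begin


locale hgs =
  fixes m :: nat and a :: "nat \<Rightarrow> ('n::finite) \<Rightarrow> int" and l :: "nat \<Rightarrow> nat"
  assumes indep: "\<forall>c::nat \<Rightarrow> real.
      (\<forall>i. (\<Sum>j\<in>{1..m}. c j * real_of_int (a j i)) = 0) \<longrightarrow> (\<forall>j\<in>{1..m}. c j = 0)"
    and pos: "\<forall>j\<in>{0..m}. l j > 0"
    and rel: "\<forall>i. int (l 0) * a 0 i = (\<Sum>j\<in>{1..m}. int (l j) * a j i)"
    and l0: "l 0 = (\<Sum>j\<in>{1..m}. l j)"
begin

definition av :: "nat \<Rightarrow> real^'n" where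
  "av j = (\<chi> i. real_of_int (a j i))"

lemma indepD: "(\<And>i. (\<Sum>j\<in>{1..m}. c j * real_of_int (a j i)) = 0) \<Longrightarrow> j \<in> {1..m} \<Longrightarrow> c j = 0"
  using indep by blast

lemma av_inj: "inj_on av {1..m}"
proof (rule inj_onI, rule ccontr)
  fix j j' assume jj: "j \<in> {1..m}" "j' \<in> {1..m}" "av j = av j'" "j \<noteq> j'"
  define c where "c = (\<lambda>t::nat. if t = j then 1 else if t = j' then -1 else (0::real))"
  have "\<And>i. real_of_int (a j i) = real_of_int (a j' i)"
    using jj(3) unfolding av_def by (metis vec_lambda_beta)
  have "(\<Sum>t\<in>{1..m}. c t * real_of_int (a t i)) = 0" for i
  proof -
    have "(\<Sum>t\<in>{1..m}. c t * real_of_int (a t i)) = (\<Sum>t\<in>{1..m}. (if t = j then real_of_int (a j i) else 0) + (if t = j' then - real_of_int (a j' i) else 0))"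
      by (rule sum.cong) (auto simp: c_def jj(4))
    also have "\<dots> = real_of_int (a j i) - real_of_int (a j' i)"
      using jj by (simp add: sum.distrib)
    finally show ?thesis using \<open>\<And>i. real_of_int (a j i) = real_of_int (a j' i)\<close> by simp
  qed
  then have "c j = 0" using indepD jj(1) by blast
  then show False by (simp add: c_def)
qed

lemma dual_ex:
  assumes k: "k \<in> {1..m}"
  shows "\<exists>\<phi>::'n\<Rightarrow>real. \<forall>j\<in>{1..m}. (\<Sum>i\<in>UNIV. \<phi> i * real_of_int (a j i)) = (if j = k then 1 else 0)"
proof -
  define S where "S = av ` ({1..m} - {k})"
  obtain y z where y: "y \<in> span S" and z: "\<And>w. w \<in> span S \<Longrightarrow> orthogonal z w" and yz: "av k = y + z"
    by (rule orthogonal_subspace_decomp_exists[of S "av k"]) blast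
  have fin: "finite S" by (simp add: S_def)
  have z0: "z \<noteq> 0"
  proof
    assume "z = 0"
    then have "av k \<in> span S" using y yz by simp
    then obtain u where u: "av k = (\<Sum>v\<in>S. u v *\<^sub>R v)"
      using span_finite[OF fin] by auto
    have inj: "inj_on av ({1..m} - {k})" using av_inj by (rule inj_on_subset) auto
    have u2: "av k = (\<Sum>j\<in>{1..m} - {k}. u (av j) *\<^sub>R av j)"
      using u unfolding S_def sum.reindex[OF inj] by (simp add: o_def)
    define c where "c = (\<lambda>t. if t = k then -1 else u (av t))"
    have "(\<Sum>t\<in>{1..m}. c t * real_of_int (a t i)) = 0" for i
    proof -
      have "(\<Sum>t\<in>{1..m}. c t * real_of_int (a t i)) = c k * real_of_int (a k i) + (\<Sum>t\<in>{1..m} - {k}. c t * real_of_int (a t i))"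
        using k by (simp add: sum.remove)
      also have "(\<Sum>t\<in>{1..m} - {k}. c t * real_of_int (a t i)) = (\<Sum>t\<in>{1..m} - {k}. u (av t) * real_of_int (a t i))"
        by (rule sum.cong) (auto simp: c_def)
      also have "\<dots> = vec_nth (\<Sum>j\<in>{1..m} - {k}. u (av j) *\<^sub>R av j) i"
        by (simp add: sum_component av_def)
      also have "\<dots> = real_of_int (a k i)" using u2[symmetric] by (simp add: av_def)
      finally show ?thesis by (simp add: c_def)
    qed
    then have "c k = 0" using indepD k by blast
    then show False by (simp add: c_def)
  qed
  define \<phi> where "\<phi> = (\<lambda>i. vec_nth z i / (z \<bullet> z))"
  have zz: "z \<bullet> z \<noteq> 0" using z0 by simp
  have ip: "(\<Sum>i\<in>UNIV. \<phi> i * real_of_int (a j i)) = (z \<bullet> av j) / (z \<bullet> z)" for j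
    by (simp add: \<phi>_def inner_vec_def av_def sum_divide_distrib)
  show ?thesis
  proof (intro exI ballI)
    fix j assume j: "j \<in> {1..m}"
    show "(\<Sum>i\<in>UNIV. \<phi> i * real_of_int (a j i)) = (if j = k then 1 else 0)"
    proof (cases "j = k")
      case True
      have "z \<bullet> y = 0" using z[OF y] by (simp add: orthogonal_def)
      then have "z \<bullet> av k = z \<bullet> z" using yz by (simp add: inner_add_right)
      then show ?thesis using True ip zz by simp
    next
      case False
      have "av j \<in> span S" using j False by (auto simp: S_def intro: span_base)
      then have "z \<bullet> av j = 0" using z by (simp add: orthogonal_def)
      then show ?thesis using False ip by simp
    qed
  qed
qed


definition phi :: "nat \<Rightarrow> 'n \<Rightarrow> real" where
  "phi k = (SOME \<phi>. \<forall>j\<in>{1..m}. (\<Sum>i\<in>UNIV. \<phi> i * real_of_int (a j i)) = (if j = k then 1 else 0))"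

lemma phi: "k \<in> {1..m} \<Longrightarrow> j \<in> {1..m} \<Longrightarrow> (\<Sum>i\<in>UNIV. phi k i * real_of_int (a j i)) = (if j = k then 1 else 0)"
  using someI_ex[OF dual_ex[of k]] unfolding phi_def by blast

definition crd :: "nat \<Rightarrow> ('n \<Rightarrow> int) \<Rightarrow> real" where
  "crd k u = (\<Sum>i\<in>UNIV. phi k i * real_of_int (u i))"

definition inV :: "('n \<Rightarrow> int) \<Rightarrow> bool" where
  "inV u \<longleftrightarrow> (\<forall>i. real_of_int (u i) = (\<Sum>j\<in>{1..m}. crd j u * real_of_int (a j i)))"

definition padd :: "('n \<Rightarrow> int) \<Rightarrow> ('n \<Rightarrow> int) \<Rightarrow> ('n \<Rightarrow> int)" where
  "padd u v = (\<lambda>i. u i + v i)"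

definition psc :: "int \<Rightarrow> ('n \<Rightarrow> int) \<Rightarrow> ('n \<Rightarrow> int)" where
  "psc c u = (\<lambda>i. c * u i)"

definition wt :: "('n \<Rightarrow> int) \<Rightarrow> real" where
  "wt u = (\<Sum>k\<in>{1..m}. crd k u)"

lemma crd_comb:
  assumes "\<And>i. real_of_int (u i) = (\<Sum>j\<in>{1..m}. c j * real_of_int (a j i))" and k: "k \<in> {1..m}"
  shows "crd k u = c k"
proof -
  have "crd k u = (\<Sum>i\<in>UNIV. \<Sum>j\<in>{1..m}. c j * (phi k i * real_of_int (a j i)))"
    unfolding crd_def assms(1) by (simp add: sum_distrib_left algebra_simps)
  also have "\<dots> = (\<Sum>j\<in>{1..m}. c j * (\<Sum>i\<in>UNIV. phi k i * real_of_int (a j i)))"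
    by (subst sum.swap) (simp add: sum_distrib_left)
  also have "\<dots> = (\<Sum>j\<in>{1..m}. (if j = k then c j else 0))"
  proof (rule sum.cong)
    fix j assume "j \<in> {1..m}"
    then show "c j * (\<Sum>i\<in>UNIV. phi k i * real_of_int (a j i)) = (if j = k then c j else 0)"
      using phi[OF k, of j] by simp
  qed simp
  also have "\<dots> = c k" using k by simp
  finally show ?thesis .
qed

lemma inV_comb:
  assumes "\<And>i. real_of_int (u i) = (\<Sum>j\<in>{1..m}. c j * real_of_int (a j i))"
  shows "inV u"
  unfolding inV_def
proof
  fix i
  have "(\<Sum>j\<in>{1..m}. crd j u * real_of_int (a j i)) = (\<Sum>j\<in>{1..m}. c j * real_of_int (a j i))"
    by (rule sum.cong) (auto simp: crd_comb[OF assms])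
  then show "real_of_int (u i) = (\<Sum>j\<in>{1..m}. crd j u * real_of_int (a j i))" using assms by simp
qed

lemma crd_add: "crd k (padd u v) = crd k u + crd k v"
  by (simp add: crd_def padd_def algebra_simps sum.distrib)

lemma crd_psc: "crd k (psc c u) = of_int c * crd k u"
  by (simp add: crd_def psc_def algebra_simps sum_distrib_left)

lemma crd_sum: "crd k (\<lambda>i. \<Sum>t\<in>T. f t i) = (\<Sum>t\<in>T. crd k (f t))"
  unfolding crd_def by (simp add: sum_distrib_left sum.swap[of _ T])

lemma crd_a: "k \<in> {1..m} \<Longrightarrow> j \<in> {1..m} \<Longrightarrow> crd k (a j) = (if j = k then 1 else 0)"
  by (simp add: crd_def phi)

lemma l0pos: "l 0 > 0" using pos by auto

lemma lpos: "j \<in> {1..m} \<Longrightarrow> l j > 0" using pos by auto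

lemma a0_comb: "real_of_int (a 0 i) = (\<Sum>j\<in>{1..m}. (real (l j) / real (l 0)) * real_of_int (a j i))"
proof -
  have "real (l 0) * real_of_int (a 0 i) = (\<Sum>j\<in>{1..m}. real (l j) * real_of_int (a j i))"
    using arg_cong[OF rel[rule_format, of i], of real_of_int] by simp
  then show ?thesis using l0pos
    by (simp add: sum_divide_distrib[symmetric] field_simps)
qed

lemma crd_a0: "k \<in> {1..m} \<Longrightarrow> crd k (a 0) = real (l k) / real (l 0)"
  using crd_comb[OF a0_comb] by simp

lemma wt_a: "j \<in> {1..m} \<Longrightarrow> wt (a j) = 1"
proof -
  assume j: "j \<in> {1..m}"
  have "wt (a j) = (\<Sum>k\<in>{1..m}. if k = j then 1 else 0)"
    unfolding wt_def by (rule sum.cong) (use j crd_a in auto)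
  then show ?thesis using j by simp
qed

lemma wt_a0: "wt (a 0) = 1"
proof -
  have "wt (a 0) = (\<Sum>k\<in>{1..m}. real (l k)) / real (l 0)"
    unfolding wt_def by (simp add: crd_a0 sum_divide_distrib)
  also have "\<dots> = 1" using l0 l0pos by (metis of_nat_sum divide_self of_nat_0_less_iff less_irrefl)
  finally show ?thesis .
qed

lemma wt_add: "wt (padd u v) = wt u + wt v"
  by (simp add: wt_def crd_add sum.distrib)

lemma wt_psc: "wt (psc c u) = of_int c * wt u"
  by (simp add: wt_def crd_psc sum_distrib_left)

lemma inV_a: "j \<in> {1..m} \<Longrightarrow> inV (a j)"
proof -
  assume j: "j \<in> {1..m}"
  show ?thesis
  proof (rule inV_comb[of _ "\<lambda>t. if t = j then 1 else 0"])
    fix i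
    have "(\<Sum>t\<in>{1..m}. (if t = j then 1 else 0) * real_of_int (a t i)) = (\<Sum>t\<in>{1..m}. if t = j then real_of_int (a j i) else 0)"
      by (rule sum.cong) auto
    then show "real_of_int (a j i) = (\<Sum>t\<in>{1..m}. (if t = j then 1 else 0) * real_of_int (a t i))"
      using j by simp
  qed
qed

lemma inV_a0: "inV (a 0)"
  by (rule inV_comb[OF a0_comb])

lemma inV_add: "inV u \<Longrightarrow> inV v \<Longrightarrow> inV (padd u v)"
  by (rule inV_comb[of _ "\<lambda>j. crd j u + crd j v"]) (simp add: inV_def padd_def algebra_simps sum.distrib)

lemma inV_psc: "inV u \<Longrightarrow> inV (psc c u)"
  by (rule inV_comb[of _ "\<lambda>j. of_int c * crd j u"]) (simp add: inV_def psc_def algebra_simps sum_distrib_left)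

lemma inV_D: "inV u \<Longrightarrow> real_of_int (u i) = (\<Sum>j\<in>{1..m}. crd j u * real_of_int (a j i))"
  by (simp add: inV_def)

lemma Mset_char: "Mset m a = {u. inV u \<and> (\<forall>k\<in>{1..m}. 0 \<le> crd k u)}"
proof (intro set_eqI iffI)
  fix u assume "u \<in> Mset m a"
  then obtain c where c: "\<forall>j\<in>{1..m}. 0 \<le> c j" "\<And>i. real_of_int (u i) = (\<Sum>j\<in>{1..m}. c j * real_of_int (a j i))"
    unfolding Mset_def by blast
  show "u \<in> {u. inV u \<and> (\<forall>k\<in>{1..m}. 0 \<le> crd k u)}"
    using inV_comb[OF c(2)] crd_comb[OF c(2)] c(1) by auto
next
  fix u assume "u \<in> {u. inV u \<and> (\<forall>k\<in>{1..m}. 0 \<le> crd k u)}"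
  then show "u \<in> Mset m a" unfolding Mset_def inV_def mem_Collect_eq by (intro exI[of _ "\<lambda>j. crd j u"]) auto
qed

lemma Bset_char: "Bset m a = {u. inV u \<and> (\<forall>k\<in>{1..m}. 0 \<le> crd k u \<and> crd k u < 1)}"
proof (intro set_eqI iffI)
  fix u assume "u \<in> Bset m a"
  then obtain c where c: "\<forall>j\<in>{1..m}. 0 \<le> c j \<and> c j < 1" "\<And>i. real_of_int (u i) = (\<Sum>j\<in>{1..m}. c j * real_of_int (a j i))"
    unfolding Bset_def by blast
  show "u \<in> {u. inV u \<and> (\<forall>k\<in>{1..m}. 0 \<le> crd k u \<and> crd k u < 1)}"
    using inV_comb[OF c(2)] crd_comb[OF c(2)] c(1) by auto
next
  fix u assume "u \<in> {u. inV u \<and> (\<forall>k\<in>{1..m}. 0 \<le> crd k u \<and> crd k u < 1)}"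
  then show "u \<in> Bset m a" unfolding Bset_def inV_def mem_Collect_eq by (intro exI[of _ "\<lambda>j. crd j u"]) auto
qed

abbreviation "MM \<equiv> Mset m a"
abbreviation "BB \<equiv> Bset m a"

lemma M_iff: "u \<in> MM \<longleftrightarrow> inV u \<and> (\<forall>k\<in>{1..m}. 0 \<le> crd k u)"
  by (simp add: Mset_char)

lemma B_iff: "u \<in> BB \<longleftrightarrow> inV u \<and> (\<forall>k\<in>{1..m}. 0 \<le> crd k u \<and> crd k u < 1)"
  by (simp add: Bset_char)

lemma B_sub_M: "BB \<subseteq> MM" by (auto simp: M_iff B_iff)

lemma M_add: "u \<in> MM \<Longrightarrow> v \<in> MM \<Longrightarrow> padd u v \<in> MM"
  by (auto simp: M_iff inV_add crd_add)

lemma M_psc: "u \<in> MM \<Longrightarrow> c \<ge> 0 \<Longrightarrow> psc c u \<in> MM"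
  by (auto simp: M_iff inV_psc crd_psc)

lemma a_M: "j \<in> {1..m} \<Longrightarrow> a j \<in> MM"
  by (auto simp: M_iff inV_a crd_a)

lemma a0_M: "a 0 \<in> MM"
  by (auto simp: M_iff inV_a0 crd_a0)

lemma wt_nonneg: "u \<in> MM \<Longrightarrow> 0 \<le> wt u"
  by (auto simp: M_iff wt_def intro: sum_nonneg)

lemma crd_le_wt: "u \<in> MM \<Longrightarrow> k \<in> {1..m} \<Longrightarrow> crd k u \<le> wt u"
  unfolding wt_def M_iff by (auto intro: member_le_sum)

lemma finite_bounded_funs: "finite {u::'n\<Rightarrow>int. \<forall>i. \<bar>u i\<bar> \<le> N}"
proof -
  have "{u::'n\<Rightarrow>int. \<forall>i. \<bar>u i\<bar> \<le> N} \<subseteq> PiE UNIV (\<lambda>_. {-N..N})"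
    by (auto simp: PiE_def Pi_def extensional_def abs_le_iff) (metis minus_le_iff)
  moreover have "finite (PiE (UNIV::'n set) (\<lambda>_. {-N..N}))" by (intro finite_PiE) auto
  ultimately show ?thesis by (rule finite_subset)
qed

lemma finite_wt_le: "finite {u \<in> MM. wt u \<le> W}"
proof -
  define T where "T = (\<Sum>i\<in>UNIV. \<Sum>j\<in>{1..m}. \<bar>real_of_int (a j i)\<bar>)"
  define N where "N = \<lceil>max W 0 * T\<rceil>"
  have T0: "0 \<le> T" unfolding T_def by (intro sum_nonneg) auto
  have "{u \<in> MM. wt u \<le> W} \<subseteq> {u. \<forall>i. \<bar>u i\<bar> \<le> N}"
  proof (safe)
    fix u i assume u: "u \<in> MM" "wt u \<le> W"
    have "\<bar>real_of_int (u i)\<bar> = \<bar>\<Sum>j\<in>{1..m}. crd j u * real_of_int (a j i)\<bar>"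
      using u by (simp add: M_iff inV_D[of u i])
    also have "\<dots> \<le> (\<Sum>j\<in>{1..m}. \<bar>crd j u * real_of_int (a j i)\<bar>)" by (rule sum_abs)
    also have "\<dots> \<le> (\<Sum>j\<in>{1..m}. max W 0 * \<bar>real_of_int (a j i)\<bar>)"
    proof (rule sum_mono)
      fix j assume j: "j \<in> {1..m}"
      have "0 \<le> crd j u" "crd j u \<le> max W 0" using u j crd_le_wt[of u j] by (auto simp: M_iff)
      then show "\<bar>crd j u * real_of_int (a j i)\<bar> \<le> max W 0 * \<bar>real_of_int (a j i)\<bar>"
        by (simp add: abs_mult mult_right_mono)
    qed
    also have "\<dots> = max W 0 * (\<Sum>j\<in>{1..m}. \<bar>real_of_int (a j i)\<bar>)" by (simp add: sum_distrib_left)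
    also have "\<dots> \<le> max W 0 * T"
      unfolding T_def by (intro mult_left_mono member_le_sum[of i UNIV "\<lambda>i. \<Sum>j\<in>{1..m}. \<bar>real_of_int (a j i)\<bar>"]) (auto intro: sum_nonneg)
    finally have "\<bar>real_of_int (u i)\<bar> \<le> max W 0 * T" .
    then show "\<bar>u i\<bar> \<le> N" unfolding N_def by linarith
  qed
  then show ?thesis using finite_bounded_funs finite_subset by blast
qed

lemma finite_B: "finite BB"
proof -
  have "BB \<subseteq> {u \<in> MM. wt u \<le> real m}"
  proof
    fix u assume u: "u \<in> BB"
    have "wt u \<le> (\<Sum>k\<in>{1..m}. 1)" unfolding wt_def
      using u by (intro sum_mono) (auto simp: B_iff less_imp_le)
    then show "u \<in> {u \<in> MM. wt u \<le> real m}" using u B_sub_M by auto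
  qed
  then show ?thesis using finite_wt_le finite_subset by blast
qed

end


context hgs begin

definition comb :: "(nat \<Rightarrow> nat) \<Rightarrow> ('n \<Rightarrow> int)" where
  "comb n = (\<lambda>i. \<Sum>j\<in>{1..m}. int (n j) * a j i)"

definition nn :: "nat \<Rightarrow> ('n \<Rightarrow> int) \<Rightarrow> nat" where
  "nn k u = nat \<lfloor>crd k u\<rfloor>"

definition beta :: "('n \<Rightarrow> int) \<Rightarrow> ('n \<Rightarrow> int)" where
  "beta u = (\<lambda>i. u i - comb (\<lambda>j. nn j u) i)"

lemma comb_real: "real_of_int (comb n i) = (\<Sum>j\<in>{1..m}. real (n j) * real_of_int (a j i))"
  by (simp add: comb_def)

lemma crd_comb_n: "k \<in> {1..m} \<Longrightarrow> crd k (comb n) = real (n k)"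
  by (rule crd_comb[OF comb_real])

lemma inV_comb_n: "inV (comb n)"
  by (rule inV_comb[OF comb_real])

lemma comb_M: "comb n \<in> MM"
  by (auto simp: M_iff inV_comb_n crd_comb_n)

lemma wt_comb: "wt (comb n) = real (\<Sum>j\<in>{1..m}. n j)"
  unfolding wt_def by (simp add: crd_comb_n)

lemma beta_padd: "padd (beta u) (comb (\<lambda>j. nn j u)) = u"
  by (simp add: padd_def beta_def)

lemma beta_alt: "beta u = padd u (psc (-1) (comb (\<lambda>j. nn j u)))"
  by (simp add: padd_def beta_def psc_def)

lemma crd_beta: "crd k (beta u) = crd k u - real (nn k u)" if "k \<in> {1..m}"
  unfolding beta_alt crd_add crd_psc using that by (simp add: crd_comb_n)

lemma inV_beta: "inV u \<Longrightarrow> inV (beta u)"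
  unfolding beta_alt by (intro inV_add inV_psc inV_comb_n)

lemma nn_real: "0 \<le> crd k u \<Longrightarrow> real (nn k u) = of_int \<lfloor>crd k u\<rfloor>"
  by (simp add: nn_def)

lemma beta_B: "u \<in> MM \<Longrightarrow> beta u \<in> BB"
proof -
  assume u: "u \<in> MM"
  have "\<forall>k\<in>{1..m}. 0 \<le> crd k (beta u) \<and> crd k (beta u) < 1"
  proof
    fix k assume k: "k \<in> {1..m}"
    have "0 \<le> crd k u" using u k by (simp add: M_iff)
    then show "0 \<le> crd k (beta u) \<and> crd k (beta u) < 1"
      using crd_beta[OF k, of u] nn_real[of k u] by linarith
  qed
  then show ?thesis using u inV_beta by (simp add: B_iff M_iff)
qed

lemma nn_B: "b \<in> BB \<Longrightarrow> k \<in> {1..m} \<Longrightarrow> nn k b = 0"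
  unfolding nn_def B_iff by (simp add: floor_eq_iff)

lemma comb_zero: "(\<forall>j\<in>{1..m}. n j = 0) \<Longrightarrow> comb n = (\<lambda>_. 0)"
  by (auto simp: comb_def)

lemma beta_B_id: "b \<in> BB \<Longrightarrow> beta b = b"
  using comb_zero[of "\<lambda>j. nn j b"] nn_B[of b] by (simp add: beta_def)

lemma nn_zero_B: "u \<in> MM \<Longrightarrow> (\<forall>k\<in>{1..m}. nn k u = 0) \<Longrightarrow> u \<in> BB"
  unfolding M_iff B_iff nn_def by (auto simp: floor_eq_iff)


lemma crd_padd_a: "k \<in> {1..m} \<Longrightarrow> j \<in> {1..m} \<Longrightarrow> crd j (padd u (a k)) = crd j u + (if j = k then 1 else 0)"
  by (simp add: crd_add crd_a)

lemma nn_padd_a: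
  assumes u: "u \<in> MM" and k: "k \<in> {1..m}" and j: "j \<in> {1..m}"
  shows "nn j (padd u (a k)) = nn j u + (if j = k then 1 else 0)"
proof -
  have "0 \<le> crd j u" using u j by (simp add: M_iff)
  then show ?thesis unfolding nn_def crd_padd_a[OF k j]
    by (auto simp: nat_add_distrib)
qed

lemma comb_plus_delta:
  assumes k: "k \<in> {1..m}"
  shows "comb (\<lambda>j. n j + (if j = k then 1 else 0)) = padd (comb n) (a k)"
proof
  fix i
  have "(\<Sum>j\<in>{1..m}. int (n j + (if j = k then 1 else 0)) * a j i)
      = (\<Sum>j\<in>{1..m}. int (n j) * a j i) + (\<Sum>j\<in>{1..m}. if j = k then a j i else 0)"
  proof -
    have "(\<Sum>j\<in>{1..m}. int (n j + (if j = k then 1 else 0)) * a j i) = (\<Sum>j\<in>{1..m}. int (n j) * a j i + (if j = k then a j i else 0))"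
      by (rule sum.cong) (auto simp: algebra_simps)
    also have "\<dots> = (\<Sum>j\<in>{1..m}. int (n j) * a j i) + (\<Sum>j\<in>{1..m}. if j = k then a j i else 0)"
      by (rule sum.distrib)
    finally show ?thesis .
  qed
  also have "(\<Sum>j\<in>{1..m}. if j = k then a j i else 0) = a k i" using k by simp
  finally show "comb (\<lambda>j. n j + (if j = k then 1 else 0)) i = padd (comb n) (a k) i"
    by (simp add: comb_def padd_def)
qed

lemma beta_padd_a:
  assumes u: "u \<in> MM" and k: "k \<in> {1..m}"
  shows "beta (padd u (a k)) = beta u"
proof -
  have "comb (\<lambda>j. nn j (padd u (a k))) = comb (\<lambda>j. nn j u + (if j = k then 1 else 0))"
    unfolding comb_def by (rule ext, rule sum.cong) (auto simp: nn_padd_a[OF u k])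
  also have "\<dots> = padd (comb (\<lambda>j. nn j u)) (a k)" by (rule comb_plus_delta[OF k])
  finally show ?thesis by (simp add: beta_def padd_def)
qed

definition FF :: "('n \<Rightarrow> int) \<Rightarrow> nat \<Rightarrow> nat \<Rightarrow> real" where
  "FF bs j t = (-1 / real (l j)) ^ t * pochhammer (crd j bs) t"

definition G :: "('n \<Rightarrow> int) \<Rightarrow> ('n \<Rightarrow> int) \<Rightarrow> real" where
  "G bs u = (if beta u = bs then (\<Prod>j\<in>{1..m}. FF bs j (nn j u)) else 0)"

lemma G_rec:
  assumes u: "u \<in> MM" and k: "k \<in> {1..m}"
  shows "G bs (padd u (a k)) = - (crd k u / real (l k)) * G bs u"
proof (cases "beta u = bs")
  case False then show ?thesis by (simp add: G_def beta_padd_a[OF u k])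
next
  case True
  have fin: "finite ({1..m} - {k})" by simp
  have P1: "(\<Prod>j\<in>{1..m}. FF bs j (nn j (padd u (a k)))) = FF bs k (Suc (nn k u)) * (\<Prod>j\<in>{1..m} - {k}. FF bs j (nn j u))"
  proof -
    have "(\<Prod>j\<in>{1..m}. FF bs j (nn j (padd u (a k)))) = FF bs k (nn k (padd u (a k))) * (\<Prod>j\<in>{1..m} - {k}. FF bs j (nn j (padd u (a k))))"
      using k by (simp add: prod.remove)
    also have "(\<Prod>j\<in>{1..m} - {k}. FF bs j (nn j (padd u (a k)))) = (\<Prod>j\<in>{1..m} - {k}. FF bs j (nn j u))"
      by (rule prod.cong) (auto simp: nn_padd_a[OF u k])
    finally show ?thesis using nn_padd_a[OF u k k] by simp
  qed
  have P2: "(\<Prod>j\<in>{1..m}. FF bs j (nn j u)) = FF bs k (nn k u) * (\<Prod>j\<in>{1..m} - {k}. FF bs j (nn j u))"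
    using k by (simp add: prod.remove)
  have cb: "crd k bs + real (nn k u) = crd k u" using crd_beta[OF k, of u] True by simp
  have F: "FF bs k (Suc (nn k u)) = - (crd k u / real (l k)) * FF bs k (nn k u)"
    unfolding FF_def pochhammer_Suc using cb by (simp add: field_simps)
  show ?thesis unfolding G_def using True beta_padd_a[OF u k] P1 P2 F by simp
qed

lemma G_B: "b \<in> BB \<Longrightarrow> G bs b = (if b = bs then 1 else 0)"
proof -
  assume b: "b \<in> BB"
  have "(\<Prod>j\<in>{1..m}. FF bs j (nn j b)) = 1"
    by (rule prod.neutral) (simp add: nn_B[OF b] FF_def)
  show ?thesis
  proof (cases "b = bs")
    case True
    have P: "(\<Prod>j\<in>{1..m}. FF bs j (nn j bs)) = 1" using \<open>(\<Prod>j\<in>{1..m}. FF bs j (nn j b)) = 1\<close> True by simp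
    have "beta bs = bs" using beta_B_id b True by simp
    then show ?thesis using P True by (simp add: G_def)
  next
    case False
    then show ?thesis by (simp add: G_def beta_B_id[OF b])
  qed
qed

definition pt :: "('n \<Rightarrow> int) \<Rightarrow> nat \<Rightarrow> ('n \<Rightarrow> int)" where
  "pt u i = padd u (psc (int i) (a 0))"

lemma pt_M: "u \<in> MM \<Longrightarrow> pt u i \<in> MM"
  unfolding pt_def by (intro M_add M_psc a0_M) auto

lemma crd_pt: "k \<in> {1..m} \<Longrightarrow> crd k (pt u i) = crd k u + real i * real (l k) / real (l 0)"
  by (simp add: pt_def crd_add crd_psc crd_a0)

definition gg :: "('n \<Rightarrow> int) \<Rightarrow> nat \<Rightarrow> ('n \<Rightarrow> int) \<Rightarrow> real" where
  "gg bs i u = (- real (l 0)) ^ i / fact i * G bs (pt u i)"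

lemma pt_padd_a: "pt (padd u (a k)) i = padd (pt u i) (a k)"
  by (simp add: pt_def padd_def fun_eq_iff)

lemma pt_padd_a0: "pt (padd u (a 0)) s = pt u (Suc s)"
  by (simp add: pt_def padd_def psc_def fun_eq_iff algebra_simps)

lemma gg_rec0:
  assumes u: "u \<in> MM" and k: "k \<in> {1..m}"
  shows "crd k u * gg bs 0 u + real (l k) * gg bs 0 (padd u (a k)) = 0"
proof -
  have "G bs (padd u (a k)) = - (crd k u / real (l k)) * G bs u" by (rule G_rec[OF u k])
  moreover have "pt u 0 = u" "pt (padd u (a k)) 0 = padd u (a k)"
    by (simp_all add: pt_def padd_def psc_def)
  ultimately show ?thesis using lpos[OF k] by (simp add: gg_def)
qed

lemma gg_recS:
  assumes u: "u \<in> MM" and k: "k \<in> {1..m}"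
  shows "crd k u * gg bs (Suc s) u + real (l k) * gg bs (Suc s) (padd u (a k)) - real (l k) * gg bs s (padd u (a 0)) = 0"
proof -
  define v where "v = pt u (Suc s)"
  have v: "v \<in> MM" using pt_M[OF u] by (simp add: v_def)
  have G1: "G bs (pt (padd u (a k)) (Suc s)) = - (crd k v / real (l k)) * G bs v"
    unfolding pt_padd_a v_def[symmetric] by (rule G_rec[OF v k])
  have cv: "crd k v = crd k u + real (Suc s) * real (l k) / real (l 0)"
    unfolding v_def by (rule crd_pt[OF k])
  have G2: "G bs (pt (padd u (a 0)) s) = G bs v" by (simp add: pt_padd_a0 v_def)
  have lk: "real (l k) > 0" using lpos[OF k] by simp
  have l0': "real (l 0) > 0" using l0pos by simp
  define c where "c = ((- real (l 0)) ^ s / fact s) * G bs v"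
  have e1: "gg bs (Suc s) u = c * (- real (l 0)) / real (Suc s)"
    unfolding gg_def c_def v_def by (simp add: field_simps)
  have e2: "gg bs (Suc s) (padd u (a k)) = c * (- real (l 0)) / real (Suc s) * (- (crd k v / real (l k)))"
    unfolding gg_def c_def G1 by (simp add: field_simps)
  have e3: "gg bs s (padd u (a 0)) = c"
    unfolding gg_def c_def G2 by simp
  have i1: "real (l k) * (- real (l 0)) / real (Suc s) * (- (crd k v / real (l k))) = real (l 0) * crd k v / real (Suc s)"
    using lk by (simp add: field_simps)
  have i2: "real (l 0) * (crd k v - crd k u) / real (Suc s) = real (l k)"
  proof -
    have "crd k v - crd k u = real (Suc s) * real (l k) / real (l 0)" using cv by simp
    moreover have "real (l 0) * (real (Suc s) * real (l k) / real (l 0)) / real (Suc s) = real (l k)"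
      using l0' by (simp del: of_nat_Suc)
    ultimately show ?thesis by simp
  qed
  have inner: "crd k u * (- real (l 0)) / real (Suc s) + real (l k) * (- real (l 0)) / real (Suc s) * (- (crd k v / real (l k))) - real (l k) = 0"
  proof -
    have S0: "real (Suc s) \<noteq> 0" by simp
    have "crd k u * (- real (l 0)) / real (Suc s) + real (l 0) * crd k v / real (Suc s) = real (l 0) * (crd k v - crd k u) / real (Suc s)"
      using S0 by (simp add: field_simps del: of_nat_Suc)
    then show ?thesis unfolding i1 i2 by simp
  qed
  have "crd k u * gg bs (Suc s) u + real (l k) * gg bs (Suc s) (padd u (a k)) - real (l k) * gg bs s (padd u (a 0))
      = c * (crd k u * (- real (l 0)) / real (Suc s) + real (l k) * (- real (l 0)) / real (Suc s) * (- (crd k v / real (l k))) - real (l k))"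
    unfolding e1 e2 e3 divide_inverse by algebra
  also have "\<dots> = 0" unfolding inner by simp
  finally show ?thesis by simp
qed

end



definition PP :: "complex poly \<Rightarrow> complex fls" where
  "PP p = fps_to_fls (fps_of_poly p)"

lemma PP_mult: "PP (p * q) = PP p * PP q"
  by (simp add: PP_def fps_of_poly_mult fls_times_fps_to_fls)
lemma PP_add: "PP (p + q) = PP p + PP q"
  by (simp add: PP_def fps_of_poly_add)
lemma PP_0 [simp]: "PP 0 = 0" by (simp add: PP_def)
lemma PP_1 [simp]: "PP 1 = 1" by (simp add: PP_def)
lemma PP_eq0: "PP p = 0 \<longleftrightarrow> p = 0"
  by (simp add: PP_def fps_to_fls_eq_0_iff)

definition HH :: "ratfun \<Rightarrow> complex fls" where
  "HH x = (SOME r. \<exists>p q. q \<noteq> 0 \<and> x = Fract p q \<and> r = PP p / PP q)"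

lemma HH_Fract: assumes q: "q \<noteq> 0" shows "HH (Fract p q) = PP p / PP q"
proof -
  have ex: "\<exists>r p' q'. q' \<noteq> 0 \<and> Fract p q = Fract p' q' \<and> r = PP p' / PP q'" using q by blast
  have "\<forall>r. (\<exists>p' q'. q' \<noteq> 0 \<and> Fract p q = Fract p' q' \<and> r = PP p' / PP q') \<longrightarrow> r = PP p / PP q"
  proof (intro allI impI)
    fix r assume "\<exists>p' q'. q' \<noteq> 0 \<and> Fract p q = Fract p' q' \<and> r = PP p' / PP q'"
    then obtain p' q' where pq: "q' \<noteq> 0" "Fract p q = Fract p' q'" "r = PP p' / PP q'" by blast
    have "p * q' = p' * q" using pq(1,2) q eq_fract(1) by blast
    then have "PP p * PP q' = PP p' * PP q" by (metis PP_mult)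
    moreover have "PP q \<noteq> 0" "PP q' \<noteq> 0" using q pq(1) PP_eq0 by auto
    ultimately show "r = PP p / PP q" using pq(3) by (simp add: frac_eq_eq)
  qed
  then show ?thesis unfolding HH_def using someI_ex[OF ex] by blast
qed

lemma PP_nz: "q \<noteq> 0 \<Longrightarrow> PP q \<noteq> 0" using PP_eq0 by auto

lemma HH_add: "HH (x + y) = HH x + HH y"
proof -
  obtain a b where x: "x = Fract a b" "b \<noteq> 0" by (cases x) auto
  obtain c d where y: "y = Fract c d" "d \<noteq> 0" by (cases y) auto
  show ?thesis using x y PP_nz[OF x(2)] PP_nz[OF y(2)]
    by (simp add: HH_Fract PP_mult PP_add field_simps)
qed

lemma HH_mult: "HH (x * y) = HH x * HH y"
proof -
  obtain a b where x: "x = Fract a b" "b \<noteq> 0" by (cases x) auto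
  obtain c d where y: "y = Fract c d" "d \<noteq> 0" by (cases y) auto
  show ?thesis using x y PP_nz[OF x(2)] PP_nz[OF y(2)]
    by (simp add: HH_Fract PP_mult PP_add field_simps)
qed

lemma HH_0 [simp]: "HH 0 = 0"
  by (simp add: Zero_fract_def HH_Fract)

lemma HH_1 [simp]: "HH 1 = 1"
  by (simp add: One_fract_def HH_Fract)

lemma HH_uminus: "HH (- x) = - HH x"
  using HH_add[of x "- x"] by (simp add: add_eq_0_iff)

lemma HH_diff: "HH (x - y) = HH x - HH y"
  using HH_add[of x "- y"] HH_uminus[of y] by simp

lemma HH_sum: "HH (\<Sum>t\<in>T. f t) = (\<Sum>t\<in>T. HH (f t))"
  by (induction T rule: infinite_finite_induct) (auto simp: HH_add)

lemma HH_of_nat [simp]: "HH (of_nat n) = of_nat n"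
  by (induction n) (auto simp: HH_add)

lemma HH_of_int [simp]: "HH (of_int k) = of_int k"
proof (cases "0 \<le> k")
  case True
  then obtain n where "k = int n" using nonneg_int_cases by blast
  then show ?thesis by simp
next
  case False
  then obtain n where "k = - int n" by (metis add.inverse_inverse neg_0_le_iff_le nonneg_int_cases linear)
  then show ?thesis by (simp add: HH_uminus)
qed

lemma HH_eq0: "HH x = 0 \<Longrightarrow> x = 0"
proof -
  assume h: "HH x = 0"
  obtain a b where x: "x = Fract a b" "b \<noteq> 0" by (cases x) auto
  then have "PP a = 0" using h PP_nz[OF x(2)] by (simp add: HH_Fract)
  then have "a = 0" using PP_eq0 by auto
  then show "x = 0" using x by (simp add: Zero_fract_def eq_fract)
qed

lemma HH_lam: "HH lam = fls_X"
  by (simp add: lam_def HH_Fract PP_def fps_of_poly_fps_X)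

definition rr :: "real \<Rightarrow> ratfun" where
  "rr r = Fract [:complex_of_real r:] 1"

lemma rr_add: "rr (x + y) = rr x + rr y"
  by (simp add: rr_def)
lemma rr_mult: "rr (x * y) = rr x * rr y"
  by (simp add: rr_def ac_simps)
lemma rr_0 [simp]: "rr 0 = 0" by (simp add: rr_def Zero_fract_def)
lemma rr_1 [simp]: "rr 1 = 1" by (simp add: rr_def One_fract_def) (metis one_pCons)
lemma rr_uminus: "rr (- x) = - rr x" by (simp add: rr_def)
lemma rr_diff: "rr (x - y) = rr x - rr y" by (simp add: rr_def)
lemma rr_sum: "rr (\<Sum>t\<in>T. f t) = (\<Sum>t\<in>T. rr (f t))"
  by (induction T rule: infinite_finite_induct) (auto simp: rr_add)
lemma rr_of_nat [simp]: "rr (of_nat n) = of_nat n"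
  by (induction n) (auto simp: rr_add)
lemma rr_of_int [simp]: "rr (of_int k) = of_int k"
proof (cases "0 \<le> k")
  case True
  then obtain n where "k = int n" using nonneg_int_cases by blast
  then show ?thesis by simp
next
  case False
  then obtain n where "k = - int n" by (metis add.inverse_inverse neg_0_le_iff_le nonneg_int_cases linear)
  then show ?thesis by (simp add: rr_uminus)
qed

lemma HH_rr: "HH (rr x) = fps_to_fls (fps_const (complex_of_real x))"
  by (simp add: rr_def HH_Fract PP_def fps_of_poly_const)




definition fin :: "'n laurent \<Rightarrow> bool" where
  "fin h \<longleftrightarrow> finite (lsupp h)"

lemma lsupp_xmon: "lsupp (xmon u) = {u}"
  by (auto simp: lsupp_def xmon_def)

lemma fin_xmon: "fin (xmon u)"
  by (simp add: fin_def lsupp_xmon)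

lemma fin_scale: "fin h \<Longrightarrow> fin (\<lambda>v. r * h v)"
  unfolding fin_def lsupp_def by (rule finite_subset[rotated]) auto

lemma fin_add: "fin h \<Longrightarrow> fin g \<Longrightarrow> fin (\<lambda>v. h v + g v)"
  unfolding fin_def lsupp_def by (rule finite_subset[of _ "{u. h u \<noteq> 0} \<union> {u. g u \<noteq> 0}"]) auto

lemma fin_diff: "fin h \<Longrightarrow> fin g \<Longrightarrow> fin (\<lambda>v. h v - g v)"
  unfolding fin_def lsupp_def by (rule finite_subset[of _ "{u. h u \<noteq> 0} \<union> {u. g u \<noteq> 0}"]) auto

lemma lsupp_sum_sub: "lsupp (\<lambda>v. \<Sum>t\<in>T. F t v) \<subseteq> (\<Union>t\<in>T. lsupp (F t))"
proof
  fix v assume "v \<in> lsupp (\<lambda>v. \<Sum>t\<in>T. F t v)"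
  then have "(\<Sum>t\<in>T. F t v) \<noteq> 0" by (simp add: lsupp_def)
  then obtain t where "t \<in> T" "F t v \<noteq> 0" by (meson sum.neutral)
  then show "v \<in> (\<Union>t\<in>T. lsupp (F t))" by (auto simp: lsupp_def)
qed

lemma fin_sum: "finite T \<Longrightarrow> (\<And>t. t \<in> T \<Longrightarrow> fin (F t)) \<Longrightarrow> fin (\<lambda>v. \<Sum>t\<in>T. F t v)"
  unfolding fin_def by (rule finite_subset[OF lsupp_sum_sub]) auto

definition Lf :: "(('n \<Rightarrow> int) \<Rightarrow> complex fls) \<Rightarrow> 'n laurent \<Rightarrow> complex fls" where
  "Lf Psi h = (\<Sum>u\<in>lsupp h. HH (h u) * Psi u)"

lemma Lf_superset: "finite S \<Longrightarrow> lsupp h \<subseteq> S \<Longrightarrow> Lf Psi h = (\<Sum>u\<in>S. HH (h u) * Psi u)"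
  unfolding Lf_def by (rule sum.mono_neutral_left) (auto simp: lsupp_def)

lemma Lf_sum:
  assumes T: "finite T" and F: "\<And>t. t \<in> T \<Longrightarrow> fin (F t)"
  shows "Lf Psi (\<lambda>v. \<Sum>t\<in>T. F t v) = (\<Sum>t\<in>T. Lf Psi (F t))"
proof -
  define S where "S = (\<Union>t\<in>T. lsupp (F t))"
  have S: "finite S" using T F by (auto simp: S_def fin_def)
  have "Lf Psi (\<lambda>v. \<Sum>t\<in>T. F t v) = (\<Sum>u\<in>S. HH (\<Sum>t\<in>T. F t u) * Psi u)"
    by (rule Lf_superset[OF S]) (use lsupp_sum_sub in \<open>auto simp: S_def\<close>)
  also have "\<dots> = (\<Sum>u\<in>S. \<Sum>t\<in>T. HH (F t u) * Psi u)"
    by (simp add: HH_sum sum_distrib_right)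
  also have "\<dots> = (\<Sum>t\<in>T. \<Sum>u\<in>S. HH (F t u) * Psi u)" by (rule sum.swap)
  also have "\<dots> = (\<Sum>t\<in>T. Lf Psi (F t))"
    by (rule sum.cong[OF refl], rule Lf_superset[symmetric, OF S]) (auto simp: S_def)
  finally show ?thesis .
qed

lemma Lf_scale: "fin h \<Longrightarrow> Lf Psi (\<lambda>v. r * h v) = HH r * Lf Psi h"
proof -
  assume h: "fin h"
  have "Lf Psi (\<lambda>v. r * h v) = (\<Sum>u\<in>lsupp h. HH (r * h u) * Psi u)"
    by (rule Lf_superset) (use h in \<open>auto simp: fin_def lsupp_def\<close>)
  also have "\<dots> = HH r * Lf Psi h" by (simp add: Lf_def HH_mult sum_distrib_left mult.assoc)
  finally show ?thesis .
qed

lemma Lf_add: "fin h \<Longrightarrow> fin g \<Longrightarrow> Lf Psi (\<lambda>v. h v + g v) = Lf Psi h + Lf Psi g"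
proof -
  assume h: "fin h" and g: "fin g"
  define S where "S = lsupp h \<union> lsupp g"
  have S: "finite S" using h g by (simp add: S_def fin_def)
  have "Lf Psi (\<lambda>v. h v + g v) = (\<Sum>u\<in>S. HH (h u + g u) * Psi u)"
    by (rule Lf_superset[OF S]) (auto simp: S_def lsupp_def)
  also have "\<dots> = (\<Sum>u\<in>S. HH (h u) * Psi u) + (\<Sum>u\<in>S. HH (g u) * Psi u)"
    by (simp add: HH_add algebra_simps sum.distrib)
  also have "\<dots> = Lf Psi h + Lf Psi g"
    using Lf_superset[OF S, of h Psi] Lf_superset[OF S, of g Psi] by (simp add: S_def)
  finally show ?thesis .
qed

lemma Lf_diff: "fin h \<Longrightarrow> fin g \<Longrightarrow> Lf Psi (\<lambda>v. h v - g v) = Lf Psi h - Lf Psi g"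
proof -
  assume h: "fin h" and g: "fin g"
  define S where "S = lsupp h \<union> lsupp g"
  have S: "finite S" using h g by (simp add: S_def fin_def)
  have "Lf Psi (\<lambda>v. h v - g v) = (\<Sum>u\<in>S. HH (h u - g u) * Psi u)"
    by (rule Lf_superset[OF S]) (auto simp: S_def lsupp_def)
  also have "\<dots> = (\<Sum>u\<in>S. HH (h u) * Psi u) - (\<Sum>u\<in>S. HH (g u) * Psi u)"
    by (simp add: HH_diff algebra_simps sum_subtractf)
  also have "\<dots> = Lf Psi h - Lf Psi g"
    using Lf_superset[OF S, of h Psi] Lf_superset[OF S, of g Psi] by (simp add: S_def)
  finally show ?thesis .
qed

lemma Lf_xmon: "Lf Psi (xmon u) = Psi u"
  unfolding Lf_def lsupp_xmon by (simp add: xmon_def)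

lemma g_decomp: "fin g \<Longrightarrow> g = (\<lambda>v. \<Sum>u\<in>lsupp g. g u * xmon u v)"
proof
  fix v assume g: "fin g"
  have "(\<Sum>u\<in>lsupp g. g u * xmon u v) = (\<Sum>u\<in>lsupp g. if u = v then g v else 0)"
    by (rule sum.cong) (auto simp: xmon_def)
  also have "\<dots> = g v" using g by (auto simp: fin_def lsupp_def)
  finally show "g v = (\<Sum>u\<in>lsupp g. g u * xmon u v)" by simp
qed

lemma theta_sum: "theta i (\<lambda>v. \<Sum>t\<in>T. F t v) = (\<lambda>v. \<Sum>t\<in>T. theta i (F t) v)"
  by (simp add: theta_def sum_distrib_left)

lemma lmult_sum2: "lmult p (\<lambda>v. \<Sum>t\<in>T. F t v) = (\<lambda>v. \<Sum>t\<in>T. lmult p (F t) v)"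
  unfolding lmult_def by (simp add: sum_distrib_left sum.swap[of _ _ T])

lemma Dop_sum: "Dop m a l i (\<lambda>v. \<Sum>t\<in>T. F t v) = (\<lambda>v. \<Sum>t\<in>T. Dop m a l i (F t) v)"
  unfolding Dop_def theta_sum lmult_sum2 by (simp add: sum.distrib)

lemma Dop_scale: "Dop m a l i (\<lambda>v. r * g v) = (\<lambda>v. r * Dop m a l i g v)"
  unfolding Dop_def theta_def lmult_def by (simp add: sum_distrib_left algebra_simps)

lemma Dop_add: "Dop m a l i (\<lambda>v. g v + h v) = (\<lambda>v. Dop m a l i g v + Dop m a l i h v)"
  unfolding Dop_def theta_def lmult_def by (simp add: sum.distrib algebra_simps)

lemma lmult_xmon: "fin p \<Longrightarrow> lmult p (xmon u) v = p (\<lambda>i. v i - u i)"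
proof -
  assume p: "fin p"
  have "lmult p (xmon u) v = (\<Sum>w\<in>lsupp p. if w = (\<lambda>i. v i - u i) then p w else 0)"
    unfolding lmult_def by (rule sum.cong) (auto simp: xmon_def fun_eq_iff algebra_simps)
  also have "\<dots> = p (\<lambda>i. v i - u i)" using p by (auto simp: fin_def lsupp_def)
  finally show ?thesis .
qed



context hgs begin

lemma xm_shift: "xmon c (\<lambda>i. v i - u i) = xmon (padd u c) v"
  by (auto simp: xmon_def padd_def fun_eq_iff algebra_simps)

lemma xm_coord: "of_int (w i) * xmon c w = of_int (c i) * (xmon c w :: ratfun)"
  by (simp add: xmon_def)

lemma fin_flam: "fin (flam m a l)"
  unfolding flam_def by (intro fin_diff fin_sum fin_scale fin_xmon) auto

lemma fin_theta: "fin p \<Longrightarrow> fin (theta i p)"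
  unfolding fin_def theta_def lsupp_def by (rule finite_subset[rotated]) auto

lemma Dop_xmon: "Dop m a l i (xmon u) = (\<lambda>v. of_int (u i) * xmon u v
      + (\<Sum>j\<in>{1..m}. (of_nat (l j) * of_int (a j i)) * xmon (padd u (a j)) v)
      - (of_nat (l 0) * lam * of_int (a 0 i)) * xmon (padd u (a 0)) v)"
proof
  fix v
  have t: "theta i (xmon u) v = of_int (u i) * xmon u v"
    by (simp add: theta_def xmon_def)
  have lm: "lmult (theta i (flam m a l)) (xmon u) v = theta i (flam m a l) (\<lambda>i. v i - u i)"
    by (rule lmult_xmon[OF fin_theta[OF fin_flam]])
  define w where "w = (\<lambda>i. v i - u i)"
  have "theta i (flam m a l) w = of_int (w i) * ((\<Sum>j\<in>{1..m}. of_nat (l j) * xmon (a j) w) - of_nat (l 0) * lam * xmon (a 0) w)"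
    by (simp add: theta_def flam_def)
  also have "\<dots> = (\<Sum>j\<in>{1..m}. of_nat (l j) * (of_int (w i) * xmon (a j) w)) - of_nat (l 0) * lam * (of_int (w i) * xmon (a 0) w)"
    by (simp add: algebra_simps sum_distrib_left)
  also have "\<dots> = (\<Sum>j\<in>{1..m}. of_nat (l j) * (of_int (a j i) * xmon (a j) w)) - of_nat (l 0) * lam * (of_int (a 0 i) * xmon (a 0) w)"
    by (simp only: xm_coord[of w i])
  also have "\<dots> = (\<Sum>j\<in>{1..m}. (of_nat (l j) * of_int (a j i)) * xmon (padd u (a j)) v) - (of_nat (l 0) * lam * of_int (a 0 i)) * xmon (padd u (a 0)) v"
    unfolding w_def xm_shift by (simp add: algebra_simps)
  finally show "Dop m a l i (xmon u) v = of_int (u i) * xmon u v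
      + (\<Sum>j\<in>{1..m}. (of_nat (l j) * of_int (a j i)) * xmon (padd u (a j)) v)
      - (of_nat (l 0) * lam * of_int (a 0 i)) * xmon (padd u (a 0)) v"
    unfolding Dop_def t lm w_def by simp
qed

lemma fin_Dop_xmon: "fin (Dop m a l i (xmon u))"
  unfolding Dop_xmon by (intro fin_diff fin_add fin_sum fin_scale fin_xmon) auto

lemma Lf_Dop_xmon: "Lf Psi (Dop m a l i (xmon u)) = HH (of_int (u i)) * Psi u
      + (\<Sum>j\<in>{1..m}. HH (of_nat (l j) * of_int (a j i)) * Psi (padd u (a j)))
      - HH (of_nat (l 0) * lam * of_int (a 0 i)) * Psi (padd u (a 0))"
proof -
  have f1: "fin (\<lambda>v. of_int (u i) * xmon u v + (\<Sum>j\<in>{1..m}. (of_nat (l j) * of_int (a j i)) * xmon (padd u (a j)) v))"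
    by (intro fin_add fin_sum fin_scale fin_xmon) auto
  have f2: "fin (\<lambda>v. (of_nat (l 0) * lam * of_int (a 0 i)) * xmon (padd u (a 0)) v)"
    by (intro fin_scale fin_xmon)
  have f3: "fin (\<lambda>v. \<Sum>j\<in>{1..m}. (of_nat (l j) * of_int (a j i)) * xmon (padd u (a j)) v)"
    by (intro fin_sum fin_scale fin_xmon) auto
  have f4: "fin (\<lambda>v. of_int (u i) * xmon u v)" by (intro fin_scale fin_xmon)
  show ?thesis
    unfolding Dop_xmon Lf_diff[OF f1 f2] Lf_add[OF f4 f3] Lf_sum[OF finite_atLeastAtMost fin_scale[OF fin_xmon]]
    by (simp add: Lf_scale[OF fin_xmon] Lf_xmon)
qed

lemma Dop_decomp: "fin g \<Longrightarrow> Dop m a l i g = (\<lambda>v. \<Sum>u\<in>lsupp g. g u * Dop m a l i (xmon u) v)"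
proof -
  assume g: "fin g"
  from g_decomp[OF g] have "Dop m a l i g = Dop m a l i (\<lambda>v. \<Sum>u\<in>lsupp g. g u * xmon u v)"
    by (rule arg_cong)
  also have "\<dots> = (\<lambda>v. \<Sum>u\<in>lsupp g. g u * Dop m a l i (xmon u) v)"
    unfolding Dop_sum Dop_scale by simp
  finally show ?thesis .
qed

lemma fin_Dop: "fin g \<Longrightarrow> fin (Dop m a l i g)"
proof -
  assume g: "fin g"
  then have "finite (lsupp g)" by (simp add: fin_def)
  then show ?thesis unfolding Dop_decomp[OF g] by (intro fin_sum fin_scale fin_Dop_xmon)
qed

definition recur :: "(('n \<Rightarrow> int) \<Rightarrow> complex fls) \<Rightarrow> bool" where
  "recur Psi \<longleftrightarrow> (\<forall>u\<in>MM. \<forall>i. HH (of_int (u i)) * Psi u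
      + (\<Sum>j\<in>{1..m}. HH (of_nat (l j) * of_int (a j i)) * Psi (padd u (a j)))
      - HH (of_nat (l 0) * lam * of_int (a 0 i)) * Psi (padd u (a 0)) = 0)"

lemma Sprime_iff: "g \<in> Sprime m a \<longleftrightarrow> fin g \<and> lsupp g \<subseteq> MM"
  by (simp add: Sprime_def is_laurent_def fin_def)

lemma Lf_Dop: assumes R: "recur Psi" and g: "g \<in> Sprime m a"
  shows "Lf Psi (Dop m a l i g) = 0"
proof -
  have fg: "fin g" and sg: "lsupp g \<subseteq> MM" using g by (auto simp: Sprime_iff)
  have "Lf Psi (Dop m a l i g) = (\<Sum>u\<in>lsupp g. Lf Psi (\<lambda>v. g u * Dop m a l i (xmon u) v))"
    unfolding Dop_decomp[OF fg] using fg unfolding fin_def[of g] by (intro Lf_sum fin_scale fin_Dop_xmon)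
  also have "\<dots> = (\<Sum>u\<in>lsupp g. HH (g u) * Lf Psi (Dop m a l i (xmon u)))"
    by (simp add: Lf_scale[OF fin_Dop_xmon])
  also have "\<dots> = 0"
  proof (rule sum.neutral, rule ballI)
    fix u assume "u \<in> lsupp g"
    then have "u \<in> MM" using sg by auto
    then have "Lf Psi (Dop m a l i (xmon u)) = 0" using R unfolding recur_def Lf_Dop_xmon by blast
    then show "HH (g u) * Lf Psi (Dop m a l i (xmon u)) = 0" by simp
  qed
  finally show ?thesis .
qed

lemma Lf_Dimage: assumes R: "recur Psi" and h: "h \<in> Dimage m a l"
  shows "Lf Psi h = 0"
proof -
  obtain g where g: "\<forall>i. g i \<in> Sprime m a" and hg: "h = (\<lambda>v. \<Sum>i\<in>UNIV. Dop m a l i (g i) v)"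
    using h unfolding Dimage_def by blast
  have "Lf Psi h = (\<Sum>i\<in>UNIV. Lf Psi (Dop m a l i (g i)))"
    unfolding hg using g by (intro Lf_sum) (auto simp: Sprime_iff intro!: fin_Dop)
  also have "\<dots> = 0" using Lf_Dop[OF R] g by simp
  finally show ?thesis .
qed

end


context hgs begin

definition QQ :: "('n \<Rightarrow> int) \<Rightarrow> ('n \<Rightarrow> int) \<Rightarrow> complex fps" where
  "QQ bs u = Abs_fps (\<lambda>i. complex_of_real (gg bs i u))"

definition Psi :: "('n \<Rightarrow> int) \<Rightarrow> ('n \<Rightarrow> int) \<Rightarrow> complex fls" where
  "Psi bs u = fps_to_fls (QQ bs u)"

lemma QQ_rec:
  assumes u: "u \<in> MM" and k: "k \<in> {1..m}"
  shows "fps_const (complex_of_real (crd k u)) * QQ bs u + fps_const (of_nat (l k)) * QQ bs (padd u (a k))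
         - fps_const (of_nat (l k)) * fps_X * QQ bs (padd u (a 0)) = 0"
proof (rule fps_ext)
  fix n
  show "fps_nth (fps_const (complex_of_real (crd k u)) * QQ bs u + fps_const (of_nat (l k)) * QQ bs (padd u (a k))
         - fps_const (of_nat (l k)) * fps_X * QQ bs (padd u (a 0))) n = fps_nth 0 n"
  proof (cases n)
    case 0
    have "complex_of_real (crd k u * gg bs 0 u + real (l k) * gg bs 0 (padd u (a k))) = 0"
      using gg_rec0[OF u k] by simp
    then show ?thesis using 0 by (simp add: QQ_def mult.assoc fps_X_mult_nth)
  next
    case (Suc s)
    have "complex_of_real (crd k u * gg bs (Suc s) u + real (l k) * gg bs (Suc s) (padd u (a k)) - real (l k) * gg bs s (padd u (a 0))) = 0"
      using gg_recS[OF u k] by simp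
    then show ?thesis using Suc by (simp add: QQ_def mult.assoc fps_X_mult_nth)
  qed
qed

lemma Psi_rec:
  assumes u: "u \<in> MM" and k: "k \<in> {1..m}"
  shows "HH (rr (crd k u)) * Psi bs u + of_nat (l k) * Psi bs (padd u (a k))
         - of_nat (l k) * fls_X * Psi bs (padd u (a 0)) = 0"
proof -
  have "fps_to_fls (fps_const (complex_of_real (crd k u)) * QQ bs u + fps_const (of_nat (l k)) * QQ bs (padd u (a k))
         - fps_const (of_nat (l k)) * fps_X * QQ bs (padd u (a 0))) = 0"
    using QQ_rec[OF u k] by simp
  then show ?thesis
    by (simp add: Psi_def HH_rr fls_times_fps_to_fls fps_of_nat fps_to_fls_of_nat)
qed

lemma recur_Psi: "recur (Psi bs)"
  unfolding recur_def
proof (intro ballI allI)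
  fix u i assume u: "u \<in> MM"
  let ?P = "Psi bs"
  have Rk: "\<forall>k\<in>{1..m}. HH (rr (crd k u)) * ?P u + of_nat (l k) * ?P (padd u (a k))
         - of_nat (l k) * fls_X * ?P (padd u (a 0)) = 0"
    using Psi_rec[OF u] by blast
  have "(\<Sum>k\<in>{1..m}. of_int (a k i) * (HH (rr (crd k u)) * ?P u + of_nat (l k) * ?P (padd u (a k))
         - of_nat (l k) * fls_X * ?P (padd u (a 0)))) = 0"
    using Rk by simp
  moreover have "(\<Sum>k\<in>{1..m}. of_int (a k i) * (HH (rr (crd k u)) * ?P u + of_nat (l k) * ?P (padd u (a k))
         - of_nat (l k) * fls_X * ?P (padd u (a 0))))
      = (\<Sum>k\<in>{1..m}. of_int (a k i) * HH (rr (crd k u))) * ?P u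
        + (\<Sum>k\<in>{1..m}. of_int (a k i) * of_nat (l k) * ?P (padd u (a k)))
        - (\<Sum>k\<in>{1..m}. of_int (a k i) * of_nat (l k)) * fls_X * ?P (padd u (a 0))"
    by (simp add: algebra_simps sum.distrib sum_subtractf sum_distrib_left sum_distrib_right)
  moreover have "(\<Sum>k\<in>{1..m}. of_int (a k i) * HH (rr (crd k u))) = (of_int (u i) :: complex fls)"
  proof -
    have "(\<Sum>k\<in>{1..m}. of_int (a k i) * HH (rr (crd k u))) = HH (rr (\<Sum>k\<in>{1..m}. crd k u * real_of_int (a k i)))"
      by (simp add: rr_sum HH_sum rr_mult HH_mult mult.commute)
    also have "(\<Sum>k\<in>{1..m}. crd k u * real_of_int (a k i)) = real_of_int (u i)"
      using u by (simp add: M_iff inV_D)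
    finally show ?thesis by simp
  qed
  moreover have "(\<Sum>k\<in>{1..m}. of_int (a k i) * of_nat (l k)) = (of_nat (l 0) * of_int (a 0 i) :: complex fls)"
  proof -
    have "of_int (int (l 0) * a 0 i) = (of_int (\<Sum>j\<in>{1..m}. int (l j) * a j i) :: complex fls)"
      using rel by simp
    then show ?thesis by (simp add: mult.commute)
  qed
  ultimately show "HH (of_int (u i)) * ?P u
      + (\<Sum>j\<in>{1..m}. HH (of_nat (l j) * of_int (a j i)) * ?P (padd u (a j)))
      - HH (of_nat (l 0) * lam * of_int (a 0 i)) * ?P (padd u (a 0)) = 0"
    by (simp add: HH_mult HH_lam algebra_simps)
qed

lemma Psi_B: "b \<in> BB \<Longrightarrow> fps_nth (QQ bs b) 0 = (if b = bs then 1 else 0)"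
proof -
  assume b: "b \<in> BB"
  have "pt b 0 = b" by (simp add: pt_def padd_def psc_def)
  then show ?thesis by (simp add: QQ_def gg_def G_B[OF b])
qed

lemma Lf_lincomb: "Lf P (lincomb BB c) = (\<Sum>b\<in>BB. HH (c b) * P b)"
  unfolding lincomb_def using finite_B
  by (simp add: Lf_sum fin_scale fin_xmon Lf_scale Lf_xmon)

lemma independence:
  assumes h: "lincomb BB c \<in> Dimage m a l"
  shows "\<forall>b\<in>BB. c b = 0"
proof (rule ccontr)
  assume "\<not> (\<forall>b\<in>BB. c b = 0)"
  define d where "d = (\<lambda>b. HH (c b))"
  define D where "D = {b\<in>BB. d b \<noteq> 0}"
  have D: "finite D" "D \<noteq> {}"
    using finite_B \<open>\<not> (\<forall>b\<in>BB. c b = 0)\<close> HH_eq0 by (auto simp: D_def d_def)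
  define v where "v = Min (fls_subdegree ` d ` D)"
  have "v \<in> fls_subdegree ` d ` D" unfolding v_def using D by (intro Min_in) auto
  then obtain bs where bs: "bs \<in> D" "fls_subdegree (d bs) = v" by auto
  have vle: "b \<in> BB \<Longrightarrow> d b \<noteq> 0 \<Longrightarrow> v \<le> fls_subdegree (d b)" for b
    unfolding v_def using D by (intro Min_le) (auto simp: D_def)
  have bsB: "bs \<in> BB" using bs by (simp add: D_def)
  have eq0: "(\<Sum>b\<in>BB. d b * Psi bs b) = 0"
    using Lf_Dimage[OF recur_Psi h] by (simp add: Lf_lincomb d_def)
  define e where "e = (\<lambda>b. fls_X_intpow (- v) * d b)"
  have e_shift: "e b = fls_shift v (d b)" for b
    unfolding e_def fls_X_intpow_times_conv_shift(1) by simp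
  have e_nonneg: "b \<in> BB \<Longrightarrow> 0 \<le> fls_subdegree (e b)" for b
  proof (cases "d b = 0")
    case True then show ?thesis by (simp add: e_shift)
  next
    case False
    assume "b \<in> BB"
    then show ?thesis unfolding e_shift using vle[OF _ False] by (intro fls_shift_nonneg_subdegree)
  qed
  have "(\<Sum>b\<in>BB. e b * Psi bs b) = fls_X_intpow (- v) * (\<Sum>b\<in>BB. d b * Psi bs b)"
    by (simp add: e_def sum_distrib_left mult.assoc)
  then have eq1: "(\<Sum>b\<in>BB. e b * Psi bs b) = 0" using eq0 by simp
  have e_conv: "b \<in> BB \<Longrightarrow> e b = fps_to_fls (fls_regpart (e b))" for b
    using e_nonneg by simp
  have nth0: "b \<in> BB \<Longrightarrow> fls_nth (e b * Psi bs b) 0 = fls_nth (e b) 0 * (if b = bs then 1 else 0)" for b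
  proof -
    assume b: "b \<in> BB"
    have "e b * Psi bs b = fps_to_fls (fls_regpart (e b) * QQ bs b)"
      by (subst e_conv[OF b]) (simp add: Psi_def fls_times_fps_to_fls)
    then have "fls_nth (e b * Psi bs b) 0 = fps_nth (fls_regpart (e b)) 0 * fps_nth (QQ bs b) 0"
      by (simp add: fps_to_fls_nth mult_nth_0)
    also have "fps_nth (fls_regpart (e b)) 0 = fls_nth (e b) 0" by simp
    finally show ?thesis using Psi_B[OF b] by simp
  qed
  have "fls_nth (\<Sum>b\<in>BB. e b * Psi bs b) 0 = (\<Sum>b\<in>BB. fls_nth (e b) 0 * (if b = bs then 1 else 0))"
    by (simp add: fls_nth_sum nth0 cong: sum.cong)
  also have "\<dots> = (\<Sum>b\<in>BB. if b = bs then fls_nth (e bs) 0 else 0)"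
    by (rule sum.cong) auto
  also have "\<dots> = fls_nth (e bs) 0" using bsB finite_B by simp
  also have "\<dots> = fls_nth (d bs) v" by (simp add: e_shift)
  finally have "fls_nth (d bs) v = 0" using eq1 by simp
  moreover have "d bs \<noteq> 0" using bs by (simp add: D_def)
  ultimately show False using bs(2) nth_fls_subdegree_zero_iff by metis
qed

end


context hgs begin

abbreviation "DD \<equiv> Dimage m a l"

lemma Sprime_add: "g \<in> Sprime m a \<Longrightarrow> h \<in> Sprime m a \<Longrightarrow> (\<lambda>v. g v + h v) \<in> Sprime m a"
proof -
  assume g: "g \<in> Sprime m a" and h: "h \<in> Sprime m a"
  have "lsupp (\<lambda>v. g v + h v) \<subseteq> lsupp g \<union> lsupp h" by (auto simp: lsupp_def)
  moreover have "fin (\<lambda>v. g v + h v)" using g h unfolding Sprime_iff by (intro fin_add) auto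
  ultimately show ?thesis using g h unfolding Sprime_iff by blast
qed

lemma Sprime_scale: "g \<in> Sprime m a \<Longrightarrow> (\<lambda>v. r * g v) \<in> Sprime m a"
  unfolding Sprime_iff by (auto simp: fin_scale lsupp_def)

lemma Dim_add: assumes "h1 \<in> DD" "h2 \<in> DD" shows "(\<lambda>v. h1 v + h2 v) \<in> DD"
proof -
  obtain g1 where g1: "\<forall>i. g1 i \<in> Sprime m a" "h1 = (\<lambda>v. \<Sum>i\<in>UNIV. Dop m a l i (g1 i) v)"
    using assms(1) unfolding Dimage_def by blast
  obtain g2 where g2: "\<forall>i. g2 i \<in> Sprime m a" "h2 = (\<lambda>v. \<Sum>i\<in>UNIV. Dop m a l i (g2 i) v)"
    using assms(2) unfolding Dimage_def by blast
  show ?thesis unfolding Dimage_def mem_Collect_eq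
    by (rule exI[of _ "\<lambda>i v. g1 i v + g2 i v"]) (simp add: g1 g2 Sprime_add Dop_add sum.distrib)
qed

lemma Dim_scale: assumes "h \<in> DD" shows "(\<lambda>v. r * h v) \<in> DD"
proof -
  obtain g where g: "\<forall>i. g i \<in> Sprime m a" "h = (\<lambda>v. \<Sum>i\<in>UNIV. Dop m a l i (g i) v)"
    using assms(1) unfolding Dimage_def by blast
  show ?thesis unfolding Dimage_def mem_Collect_eq
    by (rule exI[of _ "\<lambda>i v. r * g i v"]) (simp add: g Sprime_scale Dop_scale sum_distrib_left)
qed

lemma Dim_0: "(\<lambda>v. 0) \<in> DD"
proof -
  have "(\<lambda>v. 0) \<in> Sprime m a" by (simp add: Sprime_iff fin_def lsupp_def)
  moreover have "Dop m a l i (\<lambda>v. 0) v = 0" for i v by (simp add: Dop_def theta_def lmult_def)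
  ultimately show ?thesis unfolding Dimage_def mem_Collect_eq
    by (intro exI[of _ "\<lambda>i v. 0"]) simp
qed

lemma ratfun_of_nat_nz: "n > 0 \<Longrightarrow> (of_nat n :: ratfun) \<noteq> 0"
proof
  assume "n > 0" "(of_nat n :: ratfun) = 0"
  then have "(of_nat n :: complex fls) = 0" using HH_of_nat[of n] by simp
  then show False using \<open>n > 0\<close> by simp
qed

lemma Dim_E:
  assumes u: "u \<in> MM" and k: "k \<in> {1..m}"
  shows "(\<lambda>v. rr (crd k u) * xmon u v + of_nat (l k) * xmon (padd u (a k)) v - of_nat (l k) * lam * xmon (padd u (a 0)) v) \<in> DD"
proof -
  define g where "g = (\<lambda>i v. rr (phi k i) * xmon u v)"
  have gS: "g i \<in> Sprime m a" for i
  proof -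
    have "fin (g i)" unfolding g_def by (intro fin_scale fin_xmon)
    moreover have "lsupp (g i) \<subseteq> MM" using u by (auto simp: g_def lsupp_def xmon_def)
    ultimately show ?thesis by (simp add: Sprime_iff)
  qed
  have s1: "(\<Sum>i\<in>UNIV. rr (phi k i) * of_int (u i)) = rr (crd k u)"
    by (simp add: crd_def rr_sum rr_mult)
  have s2: "(\<Sum>i\<in>UNIV. rr (phi k i) * of_int (a j i)) = (if j = k then 1 else 0)" if j: "j \<in> {1..m}" for j
  proof -
    have "(\<Sum>i\<in>UNIV. rr (phi k i) * of_int (a j i)) = rr (crd k (a j))"
      by (simp add: crd_def rr_sum rr_mult)
    then show ?thesis using crd_a[OF k j] by simp
  qed
  have s3: "of_nat (l 0) * (\<Sum>i\<in>UNIV. rr (phi k i) * of_int (a 0 i)) = (of_nat (l k) :: ratfun)"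
  proof -
    have "(\<Sum>i\<in>UNIV. rr (phi k i) * of_int (a 0 i)) = rr (crd k (a 0))"
      by (simp add: crd_def rr_sum rr_mult)
    then have "of_nat (l 0) * (\<Sum>i\<in>UNIV. rr (phi k i) * of_int (a 0 i)) = rr (real (l 0) * crd k (a 0))"
      by (simp add: rr_mult)
    also have "real (l 0) * crd k (a 0) = real (l k)" using crd_a0[OF k] l0pos by simp
    finally show ?thesis by simp
  qed
  have "(\<lambda>v. \<Sum>i\<in>UNIV. Dop m a l i (g i) v) =
        (\<lambda>v. rr (crd k u) * xmon u v + of_nat (l k) * xmon (padd u (a k)) v - of_nat (l k) * lam * xmon (padd u (a 0)) v)"
  proof
    fix v
    have "(\<Sum>i\<in>UNIV. Dop m a l i (g i) v) = (\<Sum>i\<in>UNIV. rr (phi k i) * Dop m a l i (xmon u) v)"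
      by (simp add: g_def Dop_scale)
    also have "\<dots> = (\<Sum>i\<in>UNIV. rr (phi k i) * of_int (u i)) * xmon u v
        + (\<Sum>j\<in>{1..m}. of_nat (l j) * (\<Sum>i\<in>UNIV. rr (phi k i) * of_int (a j i)) * xmon (padd u (a j)) v)
        - of_nat (l 0) * lam * (\<Sum>i\<in>UNIV. rr (phi k i) * of_int (a 0 i)) * xmon (padd u (a 0)) v"
    proof -
      let ?r = "\<lambda>i. rr (phi k i)"
      let ?Xu = "xmon u v" and ?Xz = "xmon (padd u (a 0)) v"
      let ?X = "\<lambda>j. xmon (padd u (a j)) v"
      have "(\<Sum>i\<in>UNIV. ?r i * Dop m a l i (xmon u) v)
          = (\<Sum>i\<in>UNIV. ?r i * of_int (u i) * ?Xu + (\<Sum>j\<in>{1..m}. ?r i * (of_nat (l j) * of_int (a j i)) * ?X j) - ?r i * (of_nat (l 0) * lam * of_int (a 0 i)) * ?Xz)"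
        unfolding Dop_xmon by (rule sum.cong[OF refl]) (simp add: algebra_simps sum_distrib_left)
      also have "\<dots> = (\<Sum>i\<in>UNIV. ?r i * of_int (u i) * ?Xu) + (\<Sum>i\<in>UNIV. \<Sum>j\<in>{1..m}. ?r i * (of_nat (l j) * of_int (a j i)) * ?X j) - (\<Sum>i\<in>UNIV. ?r i * (of_nat (l 0) * lam * of_int (a 0 i)) * ?Xz)"
        by (simp only: sum.distrib sum_subtractf)
      also have "(\<Sum>i\<in>UNIV. ?r i * of_int (u i) * ?Xu) = (\<Sum>i\<in>UNIV. ?r i * of_int (u i)) * ?Xu"
        by (simp only: sum_distrib_right)
      also have "(\<Sum>i\<in>UNIV. \<Sum>j\<in>{1..m}. ?r i * (of_nat (l j) * of_int (a j i)) * ?X j) = (\<Sum>j\<in>{1..m}. \<Sum>i\<in>UNIV. ?r i * (of_nat (l j) * of_int (a j i)) * ?X j)"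
        by (rule sum.swap)
      also have "\<dots> = (\<Sum>j\<in>{1..m}. of_nat (l j) * (\<Sum>i\<in>UNIV. ?r i * of_int (a j i)) * ?X j)"
        by (rule sum.cong[OF refl]) (simp add: sum_distrib_left sum_distrib_right algebra_simps)
      also have "(\<Sum>i\<in>UNIV. ?r i * (of_nat (l 0) * lam * of_int (a 0 i)) * ?Xz) = of_nat (l 0) * lam * (\<Sum>i\<in>UNIV. ?r i * of_int (a 0 i)) * ?Xz"
        by (simp add: sum_distrib_left sum_distrib_right algebra_simps)
      finally show ?thesis .
    qed
    also have "(\<Sum>j\<in>{1..m}. of_nat (l j) * (\<Sum>i\<in>UNIV. rr (phi k i) * of_int (a j i)) * xmon (padd u (a j)) v)
        = (\<Sum>j\<in>{1..m}. if j = k then of_nat (l k) * xmon (padd u (a k)) v else 0)"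
      by (rule sum.cong) (auto simp: s2)
    also have "\<dots> = of_nat (l k) * xmon (padd u (a k)) v" using k by simp
    also have "of_nat (l 0) * lam * (\<Sum>i\<in>UNIV. rr (phi k i) * of_int (a 0 i)) * xmon (padd u (a 0)) v
        = of_nat (l k) * lam * xmon (padd u (a 0)) v"
    proof -
      let ?S = "(\<Sum>i\<in>UNIV. rr (phi k i) * of_int (a 0 i))"
      have "of_nat (l 0) * lam * ?S * xmon (padd u (a 0)) v = (of_nat (l 0) * ?S) * lam * xmon (padd u (a 0)) v"
        by (simp only: ac_simps)
      then show ?thesis unfolding s3 .
    qed
    finally show "(\<Sum>i\<in>UNIV. Dop m a l i (g i) v) = rr (crd k u) * xmon u v + of_nat (l k) * xmon (padd u (a k)) v - of_nat (l k) * lam * xmon (padd u (a 0)) v"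
      unfolding s1 .
  qed
  then show ?thesis unfolding Dimage_def mem_Collect_eq using gS by (intro exI[of _ g]) simp
qed


lemma Dim_diff: "h1 \<in> DD \<Longrightarrow> h2 \<in> DD \<Longrightarrow> (\<lambda>v. h1 v - h2 v) \<in> DD"
  using Dim_add[of h1 "\<lambda>v. (-1) * h2 v"] Dim_scale[of h2 "-1"] by simp

definition UU :: "'n laurent \<Rightarrow> bool" where
  "UU h \<longleftrightarrow> (\<exists>c. (\<lambda>v. h v - lincomb BB c v) \<in> DD)"

lemma lincomb_add: "lincomb BB (\<lambda>b. c1 b + c2 b) v = lincomb BB c1 v + lincomb BB c2 v"
  by (simp add: lincomb_def algebra_simps sum.distrib)

lemma lincomb_scale: "lincomb BB (\<lambda>b. r * c b) v = r * lincomb BB c v"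
  by (simp add: lincomb_def algebra_simps sum_distrib_left)

lemma lincomb_zero: "lincomb BB (\<lambda>b. 0) v = 0"
  by (simp add: lincomb_def)

lemma lincomb_delta: "b0 \<in> BB \<Longrightarrow> lincomb BB (\<lambda>b. if b = b0 then 1 else 0) v = xmon b0 v"
proof -
  assume b0: "b0 \<in> BB"
  have "lincomb BB (\<lambda>b. if b = b0 then 1 else 0) v = (\<Sum>b\<in>BB. if b = b0 then xmon b0 v else 0)"
    unfolding lincomb_def by (rule sum.cong) auto
  also have "\<dots> = xmon b0 v" using b0 finite_B by simp
  finally show ?thesis .
qed

lemma UU_add: assumes "UU h1" "UU h2" shows "UU (\<lambda>v. h1 v + h2 v)"
proof -
  obtain c1 where c1: "(\<lambda>v. h1 v - lincomb BB c1 v) \<in> DD" using assms(1) UU_def by blast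
  obtain c2 where c2: "(\<lambda>v. h2 v - lincomb BB c2 v) \<in> DD" using assms(2) UU_def by blast
  have "(\<lambda>v. (h1 v + h2 v) - lincomb BB (\<lambda>b. c1 b + c2 b) v) = (\<lambda>v. (h1 v - lincomb BB c1 v) + (h2 v - lincomb BB c2 v))"
    by (simp add: lincomb_add algebra_simps)
  then have X: "(\<lambda>v. (h1 v + h2 v) - lincomb BB (\<lambda>b. c1 b + c2 b) v) \<in> DD"
    using Dim_add[OF c1 c2] by simp
  show ?thesis unfolding UU_def by (rule exI[where x="\<lambda>b. c1 b + c2 b"], rule X)
qed

lemma UU_scale: assumes "UU h" shows "UU (\<lambda>v. r * h v)"
proof -
  obtain c where c: "(\<lambda>v. h v - lincomb BB c v) \<in> DD" using assms UU_def by blast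
  have "(\<lambda>v. r * h v - lincomb BB (\<lambda>b. r * c b) v) = (\<lambda>v. r * (h v - lincomb BB c v))"
    by (simp add: lincomb_scale algebra_simps)
  then have X: "(\<lambda>v. r * h v - lincomb BB (\<lambda>b. r * c b) v) \<in> DD"
    using Dim_scale[OF c, of r] by simp
  show ?thesis unfolding UU_def by (rule exI[where x="\<lambda>b. r * c b"], rule X)
qed

lemma UU_Dim: "h \<in> DD \<Longrightarrow> UU h"
  unfolding UU_def by (rule exI[of _ "\<lambda>b. 0"]) (simp add: lincomb_zero)

lemma UU_B: "b0 \<in> BB \<Longrightarrow> UU (xmon b0)"
  unfolding UU_def by (rule exI[of _ "\<lambda>b. if b = b0 then 1 else 0"]) (simp add: lincomb_delta Dim_0)

lemma UU_0: "UU (\<lambda>v. 0)"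
  by (rule UU_Dim[OF Dim_0])

lemma UU_diff: "UU h1 \<Longrightarrow> UU h2 \<Longrightarrow> UU (\<lambda>v. h1 v - h2 v)"
  using UU_add[of h1 "\<lambda>v. (-1) * h2 v"] UU_scale[of h2 "-1"] by simp

lemma UU_sum: "finite T \<Longrightarrow> (\<And>t. t \<in> T \<Longrightarrow> UU (F t)) \<Longrightarrow> UU (\<lambda>v. \<Sum>t\<in>T. F t v)"
proof (induction T rule: finite_induct)
  case empty then show ?case using UU_0 by simp
next
  case (insert x T)
  have "UU (\<lambda>v. F x v + (\<Sum>t\<in>T. F t v))"
    using insert by (intro UU_add) auto
  then show ?case using insert by simp
qed

definition cg :: "'n laurent \<Rightarrow> 'n laurent \<Rightarrow> bool" where
  "cg h1 h2 \<longleftrightarrow> UU (\<lambda>v. h1 v - h2 v)"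

lemma cg_UU: "cg h1 h2 \<Longrightarrow> UU h2 \<Longrightarrow> UU h1"
  unfolding cg_def using UU_add[of "\<lambda>v. h1 v - h2 v" h2] by simp

lemma cg_refl: "cg h h"
  unfolding cg_def using UU_0 by simp

lemma cg_trans: "cg h1 h2 \<Longrightarrow> cg h2 h3 \<Longrightarrow> cg h1 h3"
  unfolding cg_def using UU_add[of "\<lambda>v. h1 v - h2 v" "\<lambda>v. h2 v - h3 v"] by simp

lemma cg_scale: "cg h1 h2 \<Longrightarrow> cg (\<lambda>v. r * h1 v) (\<lambda>v. r * h2 v)"
  unfolding cg_def using UU_scale[of "\<lambda>v. h1 v - h2 v" r] by (simp add: algebra_simps)

lemma step_E:
  assumes u: "u \<in> MM" and k: "k \<in> {1..m}" and Uu: "UU (xmon u)"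
  shows "cg (xmon (padd u (a k))) (\<lambda>v. lam * xmon (padd u (a 0)) v)"
proof -
  define E where "E = (\<lambda>v. rr (crd k u) * xmon u v + of_nat (l k) * xmon (padd u (a k)) v - of_nat (l k) * lam * xmon (padd u (a 0)) v)"
  have UE: "UU E" unfolding E_def by (rule UU_Dim[OF Dim_E[OF u k]])
  have lk: "(of_nat (l k) :: ratfun) \<noteq> 0" using lpos[OF k] ratfun_of_nat_nz by blast
  have "(\<lambda>v. xmon (padd u (a k)) v - lam * xmon (padd u (a 0)) v)
      = (\<lambda>v. inverse (of_nat (l k)) * E v - (inverse (of_nat (l k)) * rr (crd k u)) * xmon u v)"
    unfolding E_def using lk by (simp add: fun_eq_iff field_simps)
  moreover have "UU (\<lambda>v. inverse (of_nat (l k)) * E v - (inverse (of_nat (l k)) * rr (crd k u)) * xmon u v)"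
    by (intro UU_diff UU_scale UE Uu)
  ultimately show ?thesis unfolding cg_def by simp
qed


lemma natminus: "0 < (x::nat) \<Longrightarrow> x - 1 + y = x + y - 1" by arith

lemma sum_update_minus:
  fixes n :: "nat \<Rightarrow> nat"
  assumes k: "k \<in> {1..m}" and nk: "n k > 0"
  shows "(\<Sum>j\<in>{1..m}. (n(k := n k - 1)) j) = (\<Sum>j\<in>{1..m}. n j) - 1"
proof -
  have A: "(\<Sum>j\<in>{1..m}. n j) = n k + (\<Sum>j\<in>{1..m} - {k}. n j)" using k by (simp add: sum.remove)
  have B: "(\<Sum>j\<in>{1..m}. (n(k := n k - 1)) j) = (n k - 1) + (\<Sum>j\<in>{1..m} - {k}. (n(k := n k - 1)) j)"
    using k by (simp add: sum.remove)
  have C: "(\<Sum>j\<in>{1..m} - {k}. (n(k := n k - 1)) j) = (\<Sum>j\<in>{1..m} - {k}. n j)"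
    by (rule sum.cong) auto
  have D: "n k - 1 + (\<Sum>j\<in>{1..m} - {k}. n j) = n k + (\<Sum>j\<in>{1..m} - {k}. n j) - 1" by (rule natminus[OF nk])
  show ?thesis unfolding B C A by (rule D)
qed

lemma chain:
  assumes IHW: "\<forall>q\<in>MM. wt q < W \<longrightarrow> UU (xmon q)"
  shows "p \<in> MM \<Longrightarrow> wt p + real s = W \<Longrightarrow> (\<Sum>j\<in>{1..m}. n j) = s \<Longrightarrow>
         cg (xmon (padd p (comb n))) (\<lambda>v. lam ^ s * xmon (padd p (psc (int s) (a 0))) v)"
proof (induction s arbitrary: p n)
  case 0
  then have "\<forall>j\<in>{1..m}. n j = 0" by simp
  then have c0: "comb n = (\<lambda>_. 0)" by (rule comb_zero)
  have "padd p (comb n) = p" "padd p (psc (int 0) (a 0)) = p"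
    by (simp_all add: c0 padd_def psc_def)
  then show ?case by (simp add: cg_refl)
next
  case (Suc s)
  obtain k where k: "k \<in> {1..m}" "n k > 0"
  proof (rule ccontr)
    assume "\<not> thesis"
    then have "\<forall>k\<in>{1..m}. n k = 0" using that by blast
    then show False using Suc.prems(3) by simp
  qed
  define n' where "n' = n(k := n k - 1)"
  have sn': "(\<Sum>j\<in>{1..m}. n' j) = s" using sum_update_minus[of k n, OF k(1) k(2)] Suc.prems(3) by (simp add: n'_def)
  have nn': "(\<lambda>j. n' j + (if j = k then 1 else 0)) = n" using k by (auto simp: n'_def fun_eq_iff)
  have cn: "comb n = padd (comb n') (a k)" using comb_plus_delta[OF k(1), of n'] nn' by simp
  define q where "q = padd p (comb n')"
  have qM: "q \<in> MM" unfolding q_def by (intro M_add Suc.prems(1) comb_M)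
  have wq: "wt q = W - 1" using Suc.prems(2) sn' by (simp add: q_def wt_add wt_comb)
  have Uq: "UU (xmon q)" using IHW qM wq by simp
  have e1: "padd p (comb n) = padd q (a k)" by (simp add: cn q_def padd_def add.assoc)
  have st: "cg (xmon (padd q (a k))) (\<lambda>v. lam * xmon (padd q (a 0)) v)" by (rule step_E[OF qM k(1) Uq])
  define p' where "p' = padd p (a 0)"
  have p'M: "p' \<in> MM" unfolding p'_def by (intro M_add Suc.prems(1) a0_M)
  have wp': "wt p' + real s = W" using Suc.prems(2) by (simp add: p'_def wt_add wt_a0)
  have e2: "padd q (a 0) = padd p' (comb n')" by (simp add: q_def p'_def padd_def algebra_simps)
  have e3: "padd p' (psc (int s) (a 0)) = padd p (psc (int (Suc s)) (a 0))"
    by (simp add: p'_def padd_def psc_def algebra_simps fun_eq_iff)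
  have IH: "cg (xmon (padd p' (comb n'))) (\<lambda>v. lam ^ s * xmon (padd p (psc (int (Suc s)) (a 0))) v)"
    using Suc.IH[OF p'M wp' sn'] e3 by simp
  have "cg (\<lambda>v. lam * xmon (padd q (a 0)) v) (\<lambda>v. lam * (lam ^ s * xmon (padd p (psc (int (Suc s)) (a 0))) v))"
    using cg_scale[OF IH, of lam] e2 by simp
  then have "cg (xmon (padd q (a k))) (\<lambda>v. lam * (lam ^ s * xmon (padd p (psc (int (Suc s)) (a 0))) v))"
    by (rule cg_trans[OF st])
  then show ?case using e1 by (simp add: mult.assoc)
qed

definition sv :: "('n \<Rightarrow> int) \<Rightarrow> nat" where
  "sv p = (\<Sum>k\<in>{1..m}. nn k p)"

definition orb :: "('n \<Rightarrow> int) \<Rightarrow> ('n \<Rightarrow> int)" where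
  "orb p = padd (beta p) (psc (int (sv p)) (a 0))"

lemma orb_M: "p \<in> MM \<Longrightarrow> orb p \<in> MM"
  unfolding orb_def using beta_B B_sub_M by (intro M_add M_psc a0_M) auto

lemma wt_beta: "wt p = wt (beta p) + real (sv p)"
proof -
  have "wt p = wt (padd (beta p) (comb (\<lambda>j. nn j p)))" by (simp add: beta_padd)
  then show ?thesis by (simp add: wt_add wt_comb sv_def)
qed

lemma wt_orb: "wt (orb p) = wt p"
  using wt_beta[of p] by (simp add: orb_def wt_add wt_psc wt_a0)

lemma orb_pow: "p \<in> MM \<Longrightarrow> (orb ^^ t) p \<in> MM \<and> wt ((orb ^^ t) p) = wt p"
  by (induction t) (auto simp: orb_M wt_orb)

lemma orb_step:
  assumes IHW: "\<forall>q\<in>MM. wt q < W \<longrightarrow> UU (xmon q)" and p: "p \<in> MM" "wt p = W"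
  shows "cg (xmon p) (\<lambda>v. lam ^ (sv p) * xmon (orb p) v)"
proof -
  have "cg (xmon (padd (beta p) (comb (\<lambda>j. nn j p)))) (\<lambda>v. lam ^ (sv p) * xmon (padd (beta p) (psc (int (sv p)) (a 0))) v)"
    using p wt_beta[of p] beta_B B_sub_M by (intro chain[OF IHW]) (auto simp: sv_def)
  then show ?thesis by (simp add: beta_padd orb_def)
qed

lemma orb_iter:
  assumes IHW: "\<forall>q\<in>MM. wt q < W \<longrightarrow> UU (xmon q)" and p: "p \<in> MM" "wt p = W"
  shows "cg (xmon p) (\<lambda>v. lam ^ (\<Sum>r<t. sv ((orb ^^ r) p)) * xmon ((orb ^^ t) p) v)"
proof (induction t)
  case 0 then show ?case by (simp add: cg_refl)
next
  case (Suc t)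
  define q where "q = (orb ^^ t) p"
  have q: "q \<in> MM" "wt q = W" using orb_pow[OF p(1), of t] p(2) by (auto simp: q_def)
  have "cg (\<lambda>v. lam ^ (\<Sum>r<t. sv ((orb ^^ r) p)) * xmon q v) (\<lambda>v. lam ^ (\<Sum>r<t. sv ((orb ^^ r) p)) * (lam ^ (sv q) * xmon (orb q) v))"
    by (rule cg_scale[OF orb_step[OF IHW q]])
  moreover have "cg (xmon p) (\<lambda>v. lam ^ (\<Sum>r<t. sv ((orb ^^ r) p)) * xmon q v)"
    using Suc.IH by (simp add: q_def)
  ultimately have "cg (xmon p) (\<lambda>v. lam ^ (\<Sum>r<t. sv ((orb ^^ r) p)) * (lam ^ (sv q) * xmon (orb q) v))"
    by (rule cg_trans[rotated])
  then show ?case by (simp add: q_def power_add mult.assoc)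
qed

lemma pigeon:
  assumes A: "finite A" and f: "\<And>x. x \<in> A \<Longrightarrow> f x \<in> A" and p: "p \<in> A"
  shows "\<exists>i j. i < j \<and> (f ^^ i) p = (f ^^ j) p"
proof -
  have inA: "(f ^^ t) p \<in> A" for t by (induction t) (auto simp: p f)
  have "\<not> inj_on (\<lambda>t. (f ^^ t) p) {0..card A}"
  proof
    assume "inj_on (\<lambda>t. (f ^^ t) p) {0..card A}"
    moreover have "(\<lambda>t. (f ^^ t) p) ` {0..card A} \<subseteq> A" using inA by auto
    ultimately have "card {0..card A} \<le> card A" using A by (rule card_inj_on_le)
    then show False by simp
  qed
  then obtain i j where ij: "i \<noteq> j" "(f ^^ i) p = (f ^^ j) p" unfolding inj_on_def by blast
  show ?thesis
  proof (cases "i < j")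
    case True then show ?thesis using ij by blast
  next
    case False then have "j < i" using ij(1) by simp
    then show ?thesis using ij by metis
  qed
qed

lemma HH_power: "HH (x ^ n) = HH x ^ n"
  by (induction n) (auto simp: HH_mult)

lemma lam_pow_ne1: "S > 0 \<Longrightarrow> lam ^ S \<noteq> 1"
proof
  assume S: "S > 0" and "lam ^ S = 1"
  then have "fls_X ^ S = (1 :: complex fls)" using HH_power[of lam S] HH_lam by simp
  then have "fls_subdegree (fls_X ^ S :: complex fls) = 0" by simp
  then show False using S fls_subdegree_fls_X_pow[of S] by simp
qed

lemma span_xmon: "u \<in> MM \<Longrightarrow> UU (xmon u)"
proof (induction "card {q\<in>MM. wt q < wt u}" arbitrary: u rule: less_induct)
  case less
  define W where "W = wt u"
  have IHW: "\<forall>q\<in>MM. wt q < W \<longrightarrow> UU (xmon q)"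
  proof (intro ballI impI)
    fix q assume q: "q \<in> MM" "wt q < W"
    have fin: "finite {r\<in>MM. wt r < wt u}"
      by (rule finite_subset[OF _ finite_wt_le[of "wt u"]]) auto
    have "{r\<in>MM. wt r < wt q} \<subset> {r\<in>MM. wt r < wt u}"
    proof
      show "{r\<in>MM. wt r < wt q} \<subseteq> {r\<in>MM. wt r < wt u}" using q by (auto simp: W_def)
      show "{r\<in>MM. wt r < wt q} \<noteq> {r\<in>MM. wt r < wt u}"
      proof
        assume "{r\<in>MM. wt r < wt q} = {r\<in>MM. wt r < wt u}"
        moreover have "q \<in> {r\<in>MM. wt r < wt u}" using q by (simp add: W_def)
        ultimately have "q \<in> {r\<in>MM. wt r < wt q}" by simp
        then show False by simp
      qed
    qed
    then have lt: "card {r\<in>MM. wt r < wt q} < card {r\<in>MM. wt r < wt u}" by (rule psubset_card_mono[OF fin])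
    show "UU (xmon q)" by (rule less.hyps[OF lt q(1)])
  qed
  define A where "A = {q\<in>MM. wt q = W}"
  have A: "finite A" unfolding A_def by (rule finite_subset[OF _ finite_wt_le[of W]]) auto
  have fA: "\<And>x. x \<in> A \<Longrightarrow> orb x \<in> A"
  proof -
    fix x assume x: "x \<in> A"
    have "x \<in> MM" "wt x = W" using x by (simp_all add: A_def)
    then show "orb x \<in> A" using orb_M[of x] wt_orb[of x] by (simp add: A_def)
  qed
  have uA: "u \<in> A" unfolding A_def W_def using less.prems by simp
  have ex: "\<exists>i j. i < j \<and> (orb ^^ i) u = (orb ^^ j) u"
    by (rule pigeon[of A orb u]) (use A fA uA in auto)
  from ex obtain i j where ij: "i < j" "(orb ^^ i) u = (orb ^^ j) u" by blast
  define q where "q = (orb ^^ i) u"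
  have op: "(orb ^^ i) u \<in> MM \<and> wt ((orb ^^ i) u) = wt u" by (rule orb_pow[OF less.prems])
  have q: "q \<in> MM" "wt q = W" unfolding q_def W_def using op by simp_all
  define d where "d = j - i"
  have jd: "j = d + i" using ij(1) by (simp add: d_def)
  have cyc: "(orb ^^ d) q = q"
  proof -
    have "(orb ^^ (d + i)) u = (orb ^^ d) ((orb ^^ i) u)" by (simp add: funpow_add)
    then have "(orb ^^ j) u = (orb ^^ d) q" unfolding jd q_def .
    then show ?thesis using ij(2) by (simp add: q_def)
  qed
  have d0: "0 < d" using ij(1) by (simp add: d_def)
  define S where "S = (\<Sum>r<d. sv ((orb ^^ r) q))"
  have cq: "cg (xmon q) (\<lambda>v. lam ^ S * xmon q v)"
    using orb_iter[OF IHW q, of d] cyc by (simp add: S_def)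
  have Uq: "UU (xmon q)"
  proof (cases "S = 0")
    case True
    have "sv ((orb ^^ 0) q) \<le> S" unfolding S_def using d0
      by (intro member_le_sum) auto
    then have "sv q = 0" using True by simp
    then have "\<forall>k\<in>{1..m}. nn k q = 0" by (simp add: sv_def)
    then have "q \<in> BB" using nn_zero_B q(1) by blast
    then show ?thesis by (rule UU_B)
  next
    case False
    have ne: "1 - lam ^ S \<noteq> 0" using lam_pow_ne1[of S] False by simp
    have "UU (\<lambda>v. xmon q v - lam ^ S * xmon q v)" using cq by (simp add: cg_def)
    then have "UU (\<lambda>v. inverse (1 - lam ^ S) * (xmon q v - lam ^ S * xmon q v))" by (rule UU_scale)
    moreover have "(\<lambda>v. inverse (1 - lam ^ S) * (xmon q v - lam ^ S * xmon q v)) = xmon q"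
    proof
      fix v
      have "inverse (1 - lam ^ S) * (xmon q v - lam ^ S * xmon q v) = inverse (1 - lam ^ S) * ((1 - lam ^ S) * xmon q v)"
        by (simp add: algebra_simps)
      also have "\<dots> = xmon q v" using ne by simp
      finally show "inverse (1 - lam ^ S) * (xmon q v - lam ^ S * xmon q v) = xmon q v" .
    qed
    ultimately show ?thesis by simp
  qed
  have "cg (xmon u) (\<lambda>v. lam ^ (\<Sum>r<i. sv ((orb ^^ r) u)) * xmon q v)"
    using orb_iter[OF IHW less.prems W_def[symmetric], of i] by (simp add: q_def)
  moreover have "UU (\<lambda>v. lam ^ (\<Sum>r<i. sv ((orb ^^ r) u)) * xmon q v)" by (rule UU_scale[OF Uq])
  ultimately show ?case by (rule cg_UU)
qed

lemma spanning: "g \<in> Sprime m a \<Longrightarrow> UU g"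
proof -
  assume g: "g \<in> Sprime m a"
  have fg: "fin g" and sg: "lsupp g \<subseteq> MM" using g by (auto simp: Sprime_iff)
  have "UU (\<lambda>v. \<Sum>u\<in>lsupp g. g u * xmon u v)"
    using fg sg unfolding fin_def by (intro UU_sum UU_scale span_xmon) auto
  then show ?thesis using g_decomp[OF fg] by simp
qed

theorem main: "is_quotient_basis (Sprime m a) (Dimage m a l) (Bset m a)"
  unfolding is_quotient_basis_def
proof (intro conjI ballI allI impI)
  show "finite BB" by (rule finite_B)
next
  fix b assume "b \<in> BB"
  then show "xmon b \<in> Sprime m a" using B_sub_M by (auto simp: Sprime_iff fin_xmon lsupp_xmon)
next
  fix c b assume "lincomb BB c \<in> DD" "b \<in> BB"
  then show "c b = 0" using independence[of c] by simp
next
  fix g assume "g \<in> Sprime m a"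
  then have "UU g" by (rule spanning)
  then show "\<exists>c. (\<lambda>v. g v - lincomb BB c v) \<in> DD" unfolding UU_def .
qed

end

theorem proposition5p34:
  fixes m :: nat and a :: "nat \<Rightarrow> ('n::finite) \<Rightarrow> int" and l :: "nat \<Rightarrow> nat"
  assumes indep: "\<forall>c::nat \<Rightarrow> real.
      (\<forall>i. (\<Sum>j\<in>{1..m}. c j * real_of_int (a j i)) = 0) \<longrightarrow> (\<forall>j\<in>{1..m}. c j = 0)"
    and pos: "\<forall>j\<in>{0..m}. l j > 0"
    and gcd1: "Gcd (l ` {0..m}) = 1"
    and rel: "\<forall>i. int (l 0) * a 0 i = (\<Sum>j\<in>{1..m}. int (l j) * a j i)"
    and l0: "l 0 = (\<Sum>j\<in>{1..m}. l j)"
  shows "is_quotient_basis (Sprime m a) (Dimage m a l) (Bset m a)"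
proof -
  interpret hgs m a l using indep pos rel l0 by unfold_locales
  show ?thesis by (rule main)
qed

end
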